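(* Let $A_1,\dots,A_k\subset\mathbb{N}$ be WM sets and set $\xi_i(n)=1_{A_i}(n)-d(A_i)$ for $n\ge1$ and $\xi_i(n)=0$ for $n\le0$. Let $(a_1,b_1),\dots,(a_k,b_k)\in(\mathbb{Z}\setminus\{0\})^2$ with $a_i>0$ for all $i$ and $a_ib_j-a_jb_i\neq0$ for all $i\neq j$. Then for every $\varepsilon>0$ there is $M(\varepsilon)$ such that for every $M\ge M(\varepsilon)$ there is $N(M,\varepsilon)$ such that for every $N\ge N(M,\varepsilon)$, $\|w\|_N<\varepsilon$, where $w(n)=\frac1M\sum_{m=1}^M\prod_{i=1}^k\xi_i(a_in+b_im)$ for $n=1,\dots,N$.
   Context: For a vector $w$ indexed by $1,\dots,N$, $\|w\|_N^2=\frac1N\sum_{n=1}^Nw(n)^2$. $d(S)=\lim_N\frac1N|S\cap\{1,\dots,N\}|$. $S\subset\mathbb{N}$ is a WM set if, with $\Omega=\{0,1\}^{\mathbb{N}}$, left shift $T$ and $X_{1_S}$ the orbit closure of $1_S$, for some $T$-invariant Borel probability $\mu$ on $X_{1_S}$, $1_S$ is generic for $(X_{1_S},\mu,T)$ (i.e. $\frac1N\sum_{n=0}^{N-1}f(T^n1_S)\to\int f\,d\mu$ for continuous $f$), the system is weakly mixing, and $d(S)>0$. *)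

theory Defs
  imports "HOL-Probability.Probability"
begin

text \<open>Omega = {0,1}^N is modelled as nat => bool (product topology; bool is discrete).
  Position j of a point corresponds to the natural number j+1 (the paper's N = {1,2,...}).\<close>

definition shiftT :: "(nat \<Rightarrow> bool) \<Rightarrow> (nat \<Rightarrow> bool)" where
  "shiftT \<omega> = (\<lambda>j. \<omega> (Suc j))"

definition ind_point :: "nat set \<Rightarrow> (nat \<Rightarrow> bool)" where
  "ind_point S = (\<lambda>j. Suc j \<in> S)"

definition orbit_closure :: "(nat \<Rightarrow> bool) \<Rightarrow> (nat \<Rightarrow> bool) set" where
  "orbit_closure \<omega> = closure (range (\<lambda>n. (shiftT ^^ n) \<omega>))"

definition density_seq :: "nat set \<Rightarrow> nat \<Rightarrow> real" where
  "density_seq S N = real (card (S \<inter> {1..N})) / real N"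

definition dens :: "nat set \<Rightarrow> real" where
  "dens S = lim (density_seq S)"

definition invariant_prob :: "(nat \<Rightarrow> bool) set \<Rightarrow> (nat \<Rightarrow> bool) measure \<Rightarrow> bool" where
  "invariant_prob X \<mu> \<longleftrightarrow>
     prob_space \<mu> \<and> space \<mu> = X \<and> sets \<mu> = sets (restrict_space borel X) \<and>
     shiftT \<in> \<mu> \<rightarrow>\<^sub>M \<mu> \<and>
     (\<forall>A\<in>sets \<mu>. measure \<mu> (shiftT -` A \<inter> space \<mu>) = measure \<mu> A)"

definition generic_for :: "(nat \<Rightarrow> bool) \<Rightarrow> (nat \<Rightarrow> bool) set \<Rightarrow> (nat \<Rightarrow> bool) measure \<Rightarrow> bool" where
  "generic_for \<omega> X \<mu> \<longleftrightarrow>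
     (\<forall>f :: (nat \<Rightarrow> bool) \<Rightarrow> real. continuous_on X f \<longrightarrow>
        (\<lambda>N. (\<Sum>n<N. f ((shiftT ^^ n) \<omega>)) / real N) \<longlonglongrightarrow> integral\<^sup>L \<mu> f)"

definition weakly_mixing :: "(nat \<Rightarrow> bool) measure \<Rightarrow> bool" where
  "weakly_mixing \<mu> \<longleftrightarrow>
     (\<forall>A\<in>sets \<mu>. \<forall>B\<in>sets \<mu>.
        (\<lambda>N. (\<Sum>n<N. \<bar>measure \<mu> ((shiftT ^^ n) -` A \<inter> space \<mu> \<inter> B) - measure \<mu> A * measure \<mu> B\<bar>) / real N)
          \<longlonglongrightarrow> 0)"

definition WM_set :: "nat set \<Rightarrow> bool" where
  "WM_set S \<longleftrightarrow>
     (\<exists>\<mu>. invariant_prob (orbit_closure (ind_point S)) \<mu> \<and>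
          generic_for (ind_point S) (orbit_closure (ind_point S)) \<mu> \<and>
          weakly_mixing \<mu>) \<and>
     convergent (density_seq S) \<and> dens S > 0"

definition xi :: "nat set \<Rightarrow> int \<Rightarrow> real" where
  "xi S x = (if x \<ge> 1 then (if nat x \<in> S then 1 else 0) - dens S else 0)"

definition normN :: "nat \<Rightarrow> (nat \<Rightarrow> real) \<Rightarrow> real" where
  "normN N w = sqrt ((\<Sum>n=1..N. (w n)\<^sup>2) / real N)"

end

theory Submission
  imports Defs
begin

lemma telesc_int:
  fixes \<phi> :: "int \<Rightarrow> real"
  shows "(\<Sum>n\<in>{1..N}. \<phi> (int n + 1) - \<phi> (int n)) = \<phi> (int N + 1) - \<phi> 1"
  by (induction N) (auto simp: add.commute)

lemma shift1_nat:
  fixes f :: "int \<Rightarrow> real"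
  assumes "\<And>y. \<bar>f y\<bar> \<le> 1"
  shows "\<bar>(\<Sum>n\<in>{1..N}. f (int n + int p)) - (\<Sum>n\<in>{1..N}. f (int n))\<bar> \<le> 2 * real p"
proof (induction p)
  case 0 then show ?case by simp
next
  case (Suc p)
  have "(\<Sum>n\<in>{1..N}. f (int n + int (Suc p))) - (\<Sum>n\<in>{1..N}. f (int n + int p))
      = (\<Sum>n\<in>{1..N}. f (int n + 1 + int p) - f (int n + int p))"
    by (simp add: sum_subtractf algebra_simps)
  also have "\<dots> = f (int N + 1 + int p) - f (1 + int p)"
    using telesc_int[of "\<lambda>y. f (y + int p)" N] by simp
  finally have "\<bar>(\<Sum>n\<in>{1..N}. f (int n + int (Suc p))) - (\<Sum>n\<in>{1..N}. f (int n + int p))\<bar> \<le> 2"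
    using assms[of "int N + 1 + int p"] assms[of "1 + int p"] by linarith
  with Suc show ?case by simp
qed

lemma shift1:
  fixes f :: "int \<Rightarrow> real"
  assumes "\<And>y. \<bar>f y\<bar> \<le> 1"
  shows "\<bar>(\<Sum>n\<in>{1..N}. f (int n + p)) - (\<Sum>n\<in>{1..N}. f (int n))\<bar> \<le> 2 * \<bar>p\<bar>"
proof (cases "p \<ge> 0")
  case True
  then obtain q where "p = int q" by (metis nonneg_eq_int)
  with shift1_nat[where f=f and N=N and p=q] assms show ?thesis by simp
next
  case False
  define q where "q = nat (- p)"
  have q: "p = - int q" using False unfolding q_def by simp
  have "\<bar>(\<Sum>n\<in>{1..N}. f (int n - int q + int q)) - (\<Sum>n\<in>{1..N}. f (int n - int q))\<bar> \<le> 2 * real q"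
    using shift1_nat[where f="\<lambda>y. f (y - int q)" and N=N and p=q] assms by simp
  then show ?thesis using q by (simp add: abs_minus_commute)
qed

lemma vdC:
  fixes u :: "int \<Rightarrow> real"
  assumes u: "\<And>y. \<bar>u y\<bar> \<le> 1" and H: "1 \<le> H" "H \<le> M"
  shows "((\<Sum>m\<in>{1..M}. u (int m)) / real M)^2
     \<le> (\<Sum>h<H. \<Sum>h'<H. (\<Sum>m\<in>{1..M}. u (int m + int h) * u (int m + int h')) / real M) / (real H)^2
        + 4 * real H / real M"
proof -
  define S where "S = (\<Sum>m\<in>{1..M}. u (int m))"
  define w where "w m = (\<Sum>h<H. u (int m + int h))" for m
  define E where "E = S - (\<Sum>m\<in>{1..M}. w m) / real H"
  have HM: "real H > 0" "real M > 0" using H by auto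
  have Sb: "\<bar>S\<bar> \<le> real M"
  proof -
    have "\<bar>S\<bar> \<le> (\<Sum>m\<in>{1..M}. \<bar>u (int m)\<bar>)" unfolding S_def by (rule sum_abs)
    also have "\<dots> \<le> (\<Sum>m\<in>{1..M}. 1)" by (rule sum_mono) (use u in auto)
    finally show ?thesis by simp
  qed
  have sw: "(\<Sum>m\<in>{1..M}. w m) = (\<Sum>h<H. \<Sum>m\<in>{1..M}. u (int m + int h))"
    unfolding w_def by (rule sum.swap)
  have "E = (\<Sum>h<H. S - (\<Sum>m\<in>{1..M}. u (int m + int h))) / real H"
    unfolding E_def sw using HM by (simp add: sum_subtractf field_simps)
  hence "\<bar>E\<bar> \<le> (\<Sum>h<H. \<bar>S - (\<Sum>m\<in>{1..M}. u (int m + int h))\<bar>) / real H"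
    using HM by (simp add: divide_right_mono sum_abs)
  also have "\<dots> \<le> (\<Sum>h<H. 2 * real H) / real H"
  proof -
    have "(\<Sum>h<H. \<bar>S - (\<Sum>m\<in>{1..M}. u (int m + int h))\<bar>) \<le> (\<Sum>h<H. 2 * real H)"
    proof (rule sum_mono)
      fix h assume "h \<in> {..<H}"
      have "\<bar>(\<Sum>m\<in>{1..M}. u (int m + int h)) - S\<bar> \<le> 2 * \<bar>int h\<bar>"
        unfolding S_def by (rule shift1[OF u])
      thus "\<bar>S - (\<Sum>m\<in>{1..M}. u (int m + int h))\<bar> \<le> 2 * real H" using \<open>h \<in> {..<H}\<close>
        by (simp add: abs_minus_commute)
    qed
    thus ?thesis using HM by (intro divide_right_mono) auto
  qed
  also have "\<dots> = 2 * real H" using HM by simp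
  finally have Eb: "\<bar>E\<bar> \<le> 2 * real H" using HM by simp
  have cs: "(\<Sum>m\<in>{1..M}. w m)^2 \<le> (\<Sum>m\<in>{1..M}. (w m)^2) * real M"
    using sum_squared_le_sum_of_squares[of w "{1..M}"] by simp
  have sq: "(\<Sum>m\<in>{1..M}. (w m)^2) = (\<Sum>h<H. \<Sum>h'<H. \<Sum>m\<in>{1..M}. u (int m + int h) * u (int m + int h'))"
  proof -
    have "(\<Sum>m\<in>{1..M}. (w m)^2) = (\<Sum>m\<in>{1..M}. \<Sum>h<H. \<Sum>h'<H. u (int m + int h) * u (int m + int h'))"
      unfolding w_def power2_eq_square sum_product by simp
    also have "\<dots> = (\<Sum>h<H. \<Sum>m\<in>{1..M}. \<Sum>h'<H. u (int m + int h) * u (int m + int h'))"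
      by (rule sum.swap)
    also have "\<dots> = (\<Sum>h<H. \<Sum>h'<H. \<Sum>m\<in>{1..M}. u (int m + int h) * u (int m + int h'))"
      by (rule sum.cong[OF refl], rule sum.swap)
    finally show ?thesis .
  qed
  have "S^2 = (S - E)^2 + 2 * E * S - E^2" by (simp add: power2_eq_square algebra_simps)
  also have "\<dots> \<le> (S - E)^2 + 4 * real H * real M"
  proof -
    have "2 * E * S \<le> 2 * \<bar>E\<bar> * \<bar>S\<bar>" by (simp add: abs_mult[symmetric] mult.assoc)
    also have "\<dots> \<le> 2 * (2 * real H) * real M"
      using Eb Sb by (intro mult_mono) auto
    finally have "2 * E * S \<le> 4 * real H * real M" by simp
    thus ?thesis using zero_le_power2[of E] by linarith
  qed
  finally have A: "S^2 \<le> (S - E)^2 + 4 * real H * real M" .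
  have "(S - E)^2 = (\<Sum>m\<in>{1..M}. w m)^2 / (real H)^2"
    unfolding E_def by (simp add: power_divide)
  also have "\<dots> \<le> (\<Sum>m\<in>{1..M}. (w m)^2) * real M / (real H)^2"
    using cs by (simp add: divide_right_mono)
  finally have main: "S^2 \<le> (\<Sum>m\<in>{1..M}. (w m)^2) * real M / (real H)^2 + 4 * real H * real M"
    using A by linarith
  have "(S / real M)^2 = S^2 / (real M)^2" by (simp add: power_divide)
  also have "\<dots> \<le> ((\<Sum>m\<in>{1..M}. (w m)^2) * real M / (real H)^2 + 4 * real H * real M) / (real M)^2"
    using main by (simp add: divide_right_mono)
  also have "\<dots> = (\<Sum>m\<in>{1..M}. (w m)^2) / real M / (real H)^2 + 4 * real H / real M"
    using HM by (simp add: field_simps power2_eq_square)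
  also have "(\<Sum>m\<in>{1..M}. (w m)^2) / real M = (\<Sum>h<H. \<Sum>h'<H. (\<Sum>m\<in>{1..M}. u (int m + int h) * u (int m + int h')) / real M)"
    unfolding sq by (simp add: sum_divide_distrib)
  finally show ?thesis unfolding S_def .
qed

definition Qsum :: "nat \<Rightarrow> nat \<Rightarrow> (int \<Rightarrow> int \<Rightarrow> real) \<Rightarrow> real" where
  "Qsum N M u = (\<Sum>n\<in>{1..N}. ((\<Sum>m\<in>{1..M}. u (int n) (int m)) / real M)^2) / real N"

fun psi :: "nat list \<Rightarrow> (int \<Rightarrow> real) \<Rightarrow> real" where
  "psi [] g = 0"
| "psi [b] g = Inf {\<beta>. \<exists>M0. \<forall>M\<ge>M0. \<exists>N0. \<forall>N\<ge>N0. Qsum N M (\<lambda>y m. g (y + int b * m)) \<le> \<beta>}"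
| "psi (b # b' # bs) g = Inf {\<beta>. \<exists>H0. \<forall>H\<ge>H0.
      (\<Sum>h<H. \<Sum>h'<H. sqrt (psi (b' # bs) (\<lambda>y. g (y + int b * int h) * g (y + int b * int h')))) / (real H)^2 \<le> \<beta>}"

definition VF :: "nat \<Rightarrow> (nat \<Rightarrow> int) \<Rightarrow> (nat \<Rightarrow> int) \<Rightarrow> bool" where
  "VF k a b \<longleftrightarrow> (\<forall>i<k. a i > 0 \<and> b i \<noteq> 0) \<and> (\<forall>i<k. \<forall>j<k. i \<noteq> j \<longrightarrow> a i * b j - a j * b i \<noteq> 0)"

definition QP :: "nat \<Rightarrow> (nat \<Rightarrow> int) \<Rightarrow> (nat \<Rightarrow> int) \<Rightarrow> bool" where
  "QP k a b \<longleftrightarrow> (\<exists>bs C. C \<ge> 0 \<and> bs \<noteq> [] \<and> (\<forall>x\<in>set bs. x > 0) \<and>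
     (\<forall>g::nat \<Rightarrow> int \<Rightarrow> real. (\<forall>i y. \<bar>g i y\<bar> \<le> 1) \<longrightarrow>
       (\<forall>\<epsilon>>0. \<exists>M0. \<forall>M\<ge>M0. \<forall>c::nat \<Rightarrow> int. \<exists>N0. \<forall>N\<ge>N0.
          Qsum N M (\<lambda>n m. \<Prod>i<k. g i (a i * n + b i * m + c i)) \<le> C * psi bs (g 0) + \<epsilon>)))"

lemma Qsum_nonneg: "Qsum N M u \<ge> 0"
  unfolding Qsum_def by (intro divide_nonneg_nonneg sum_nonneg) auto

lemma Qsum_le1:
  assumes "\<And>n m. \<bar>u n m\<bar> \<le> 1"
  shows "Qsum N M u \<le> 1"
proof -
  have "((\<Sum>m\<in>{1..M}. u (int n) (int m)) / real M)^2 \<le> 1" for n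
  proof -
    have "\<bar>\<Sum>m\<in>{1..M}. u (int n) (int m)\<bar> \<le> (\<Sum>m\<in>{1..M}. \<bar>u (int n) (int m)\<bar>)" by (rule sum_abs)
    also have "\<dots> \<le> (\<Sum>m\<in>{1..M}. 1)" by (rule sum_mono) (use assms in auto)
    finally have "\<bar>\<Sum>m\<in>{1..M}. u (int n) (int m)\<bar> \<le> real M" by simp
    hence "\<bar>(\<Sum>m\<in>{1..M}. u (int n) (int m)) / real M\<bar> \<le> 1"
      by (cases "M = 0") (auto simp: divide_le_eq_1)
    hence "\<bar>(\<Sum>m\<in>{1..M}. u (int n) (int m)) / real M\<bar>^2 \<le> 1"
      by (simp add: power_le_one)
    thus ?thesis by (simp only: power2_abs)
  qed
  hence "(\<Sum>n\<in>{1..N}. ((\<Sum>m\<in>{1..M}. u (int n) (int m)) / real M)^2) \<le> (\<Sum>n\<in>{1..N}. 1)"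
    by (intro sum_mono) auto
  thus ?thesis unfolding Qsum_def by (cases "N = 0") (auto simp: divide_le_eq_1)
qed

lemma inf_props:
  fixes S :: "real set"
  assumes x0: "x0 \<in> S" and nn: "\<And>\<beta>. \<beta> \<in> S \<Longrightarrow> \<beta> \<ge> 0"
    and up: "\<And>\<beta> \<beta>'. \<beta> \<in> S \<Longrightarrow> \<beta> \<le> \<beta>' \<Longrightarrow> \<beta>' \<in> S"
  shows "0 \<le> Inf S" "Inf S \<le> x0" "\<And>x. x \<in> S \<Longrightarrow> Inf S \<le> x" "\<And>\<eta>. \<eta> > 0 \<Longrightarrow> Inf S + \<eta> \<in> S"
proof -
  have bdd: "bdd_below S" using nn by (auto simp: bdd_below_def)
  have ne: "S \<noteq> {}" using x0 by auto
  show "0 \<le> Inf S" using nn ne by (intro cInf_greatest) auto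
  show "\<And>x. x \<in> S \<Longrightarrow> Inf S \<le> x" using bdd by (simp add: cInf_lower)
  thus "Inf S \<le> x0" using x0 by blast
  fix \<eta> :: real assume "\<eta> > 0"
  hence "Inf S < Inf S + \<eta>" by simp
  then obtain x where "x \<in> S" "x < Inf S + \<eta>" using cInf_lessD[OF ne] by blast
  thus "Inf S + \<eta> \<in> S" using up by auto
qed

lemma psi_induct2:
  fixes P :: "nat list \<Rightarrow> (int \<Rightarrow> real) \<Rightarrow> bool" and g :: "int \<Rightarrow> real"
  assumes "\<And>g. P [] g" "\<And>b g. P [b] g"
    "\<And>b b' bs g. (\<And>h h'. P (b' # bs) (\<lambda>y. g (y + int b * int h) * g (y + int b * int h'))) \<Longrightarrow> P (b # b' # bs) g"
  shows "P bs g"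
proof (induction bs g rule: psi.induct)
  case (1 g) then show ?case by (rule assms(1))
next
  case (2 b g) then show ?case by (rule assms(2))
next
  case (3 b b' bs g)
  show ?case
  proof (rule assms(3))
    fix h h'
    show "P (b' # bs) (\<lambda>y. g (y + int b * int h) * g (y + int b * int h'))"
      by (rule 3[of 0 "Suc (max h h')"]) auto
  qed
qed

lemma psi_bounds:
  "(\<And>y. \<bar>g y\<bar> \<le> 1) \<Longrightarrow> 0 \<le> psi bs g \<and> psi bs g \<le> 1"
proof (induction bs g rule: psi_induct2)
  case (1 g) then show ?case by simp
next
  case (2 b g)
  let ?S = "{\<beta>. \<exists>M0. \<forall>M\<ge>M0. \<exists>N0. \<forall>N\<ge>N0. Qsum N M (\<lambda>y m. g (y + int b * m)) \<le> \<beta>}"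
  have "Qsum N M (\<lambda>y m. g (y + int b * m)) \<le> 1" for N M by (rule Qsum_le1) (rule 2)
  hence "1 \<in> ?S" by auto
  moreover have "\<beta> \<ge> 0" if "\<beta> \<in> ?S" for \<beta>
  proof -
    from that obtain M0 where "\<forall>M\<ge>M0. \<exists>N0. \<forall>N\<ge>N0. Qsum N M (\<lambda>y m. g (y + int b * m)) \<le> \<beta>" by auto
    then obtain N0 where "\<forall>N\<ge>N0. Qsum N M0 (\<lambda>y m. g (y + int b * m)) \<le> \<beta>" by auto
    thus ?thesis using Qsum_nonneg[of N0 M0] by (meson order_trans order_refl)
  qed
  moreover have "\<beta>' \<in> ?S" if "\<beta> \<in> ?S" "\<beta> \<le> \<beta>'" for \<beta> \<beta>'
  proof -
    from that(1) obtain M0 where "\<forall>M\<ge>M0. \<exists>N0. \<forall>N\<ge>N0. Qsum N M (\<lambda>y m. g (y + int b * m)) \<le> \<beta>" by auto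
    hence "\<forall>M\<ge>M0. \<exists>N0. \<forall>N\<ge>N0. Qsum N M (\<lambda>y m. g (y + int b * m)) \<le> \<beta>'" using that(2) by (meson order_trans)
    thus ?thesis by auto
  qed
  ultimately have "0 \<le> Inf ?S \<and> Inf ?S \<le> 1" using inf_props(1,2)[of 1 ?S] by blast
  thus ?case by (simp only: psi.simps)
next
  case (3 b b' bs g)
  let ?f = "\<lambda>H. (\<Sum>h<H. \<Sum>h'<H. sqrt (psi (b' # bs) (\<lambda>y. g (y + int b * int h) * g (y + int b * int h')))) / (real H)^2"
  let ?S = "{\<beta>. \<exists>H0. \<forall>H\<ge>H0. ?f H \<le> \<beta>}"
  have bd: "0 \<le> psi (b' # bs) (\<lambda>y. g (y + int b * int h) * g (y + int b * int h')) \<and>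
        psi (b' # bs) (\<lambda>y. g (y + int b * int h) * g (y + int b * int h')) \<le> 1" for h h'
  proof (rule 3(1))
    fix y
    have "\<bar>g (y + int b * int h)\<bar> * \<bar>g (y + int b * int h')\<bar> \<le> 1"
      using 3(2)[of "y + int b * int h"] 3(2)[of "y + int b * int h'"] by (intro mult_le_one) auto
    thus "\<bar>g (y + int b * int h) * g (y + int b * int h')\<bar> \<le> 1" by (simp add: abs_mult)
  qed
  have f0: "0 \<le> ?f H" for H using bd by (intro divide_nonneg_nonneg sum_nonneg) auto
  have f1: "?f H \<le> 1" for H
  proof -
    have "(\<Sum>h<H. \<Sum>h'<H. sqrt (psi (b' # bs) (\<lambda>y. g (y + int b * int h) * g (y + int b * int h')))) \<le> (\<Sum>h<H. \<Sum>h'<H. 1)"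
      using bd by (intro sum_mono) auto
    also have "\<dots> = (real H)^2" by (simp add: power2_eq_square)
    finally show ?thesis by (cases "H = 0") (simp_all add: divide_le_eq_1)
  qed
  have "1 \<in> ?S" using f1 by auto
  moreover have "\<beta> \<ge> 0" if "\<beta> \<in> ?S" for \<beta>
  proof -
    from that obtain H0 where "\<forall>H\<ge>H0. ?f H \<le> \<beta>" by auto
    thus ?thesis using f0[of H0] by (meson order_trans order_refl)
  qed
  moreover have "\<beta>' \<in> ?S" if "\<beta> \<in> ?S" "\<beta> \<le> \<beta>'" for \<beta> \<beta>'
  proof -
    from that(1) obtain H0 where "\<forall>H\<ge>H0. ?f H \<le> \<beta>" by auto
    hence "\<forall>H\<ge>H0. ?f H \<le> \<beta>'" using that(2) by (meson order_trans)
    thus ?thesis by auto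
  qed
  ultimately have "0 \<le> Inf ?S \<and> Inf ?S \<le> 1" using inf_props(1,2)[of 1 ?S] by blast
  thus ?case by (simp only: psi.simps)
qed

lemma psi_base_approx:
  assumes g: "\<And>y. \<bar>g y\<bar> \<le> 1" and eta: "\<eta> > 0"
  shows "\<exists>M0. \<forall>M\<ge>M0. \<exists>N0. \<forall>N\<ge>N0. Qsum N M (\<lambda>y m. g (y + int b * m)) \<le> psi [b] g + \<eta>"
proof -
  let ?S = "{\<beta>. \<exists>M0. \<forall>M\<ge>M0. \<exists>N0. \<forall>N\<ge>N0. Qsum N M (\<lambda>y m. g (y + int b * m)) \<le> \<beta>}"
  have "Qsum N M (\<lambda>y m. g (y + int b * m)) \<le> 1" for N M by (rule Qsum_le1) (rule g)
  hence "1 \<in> ?S" by auto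
  moreover have "\<beta> \<ge> 0" if "\<beta> \<in> ?S" for \<beta>
  proof -
    from that obtain M0 where "\<forall>M\<ge>M0. \<exists>N0. \<forall>N\<ge>N0. Qsum N M (\<lambda>y m. g (y + int b * m)) \<le> \<beta>" by auto
    then obtain N0 where "\<forall>N\<ge>N0. Qsum N M0 (\<lambda>y m. g (y + int b * m)) \<le> \<beta>" by auto
    thus ?thesis using Qsum_nonneg[of N0 M0] by (meson order_trans order_refl)
  qed
  moreover have "\<beta>' \<in> ?S" if "\<beta> \<in> ?S" "\<beta> \<le> \<beta>'" for \<beta> \<beta>'
  proof -
    from that(1) obtain M0 where "\<forall>M\<ge>M0. \<exists>N0. \<forall>N\<ge>N0. Qsum N M (\<lambda>y m. g (y + int b * m)) \<le> \<beta>" by auto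
    hence "\<forall>M\<ge>M0. \<exists>N0. \<forall>N\<ge>N0. Qsum N M (\<lambda>y m. g (y + int b * m)) \<le> \<beta>'" using that(2) by (meson order_trans)
    thus ?thesis by auto
  qed
  ultimately have "Inf ?S + \<eta> \<in> ?S" using inf_props(4)[of 1 ?S \<eta>] eta by blast
  thus ?thesis by (simp only: psi.simps mem_Collect_eq)
qed

lemma psi_rec_approx:
  assumes g: "\<And>y. \<bar>g y\<bar> \<le> 1" and eta: "\<eta> > 0"
  shows "\<exists>H0. \<forall>H\<ge>H0. (\<Sum>h<H. \<Sum>h'<H. sqrt (psi (b' # bs) (\<lambda>y. g (y + int b * int h) * g (y + int b * int h')))) / (real H)^2
     \<le> psi (b # b' # bs) g + \<eta>"
proof -
  let ?f = "\<lambda>H. (\<Sum>h<H. \<Sum>h'<H. sqrt (psi (b' # bs) (\<lambda>y. g (y + int b * int h) * g (y + int b * int h')))) / (real H)^2"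
  let ?S = "{\<beta>. \<exists>H0. \<forall>H\<ge>H0. ?f H \<le> \<beta>}"
  have bd: "0 \<le> psi (b' # bs) (\<lambda>y. g (y + int b * int h) * g (y + int b * int h')) \<and>
        psi (b' # bs) (\<lambda>y. g (y + int b * int h) * g (y + int b * int h')) \<le> 1" for h h'
  proof (rule psi_bounds)
    fix y
    have "\<bar>g (y + int b * int h)\<bar> * \<bar>g (y + int b * int h')\<bar> \<le> 1"
      using g[of "y + int b * int h"] g[of "y + int b * int h'"] by (intro mult_le_one) auto
    thus "\<bar>g (y + int b * int h) * g (y + int b * int h')\<bar> \<le> 1" by (simp add: abs_mult)
  qed
  have f0: "0 \<le> ?f H" for H using bd by (intro divide_nonneg_nonneg sum_nonneg) auto
  have f1: "?f H \<le> 1" for H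
  proof -
    have "(\<Sum>h<H. \<Sum>h'<H. sqrt (psi (b' # bs) (\<lambda>y. g (y + int b * int h) * g (y + int b * int h')))) \<le> (\<Sum>h<H. \<Sum>h'<H. 1)"
      using bd by (intro sum_mono) auto
    also have "\<dots> = (real H)^2" by (simp add: power2_eq_square)
    finally show ?thesis by (cases "H = 0") (simp_all add: divide_le_eq_1)
  qed
  have "1 \<in> ?S" using f1 by auto
  moreover have "\<beta> \<ge> 0" if "\<beta> \<in> ?S" for \<beta>
  proof -
    from that obtain H0 where "\<forall>H\<ge>H0. ?f H \<le> \<beta>" by auto
    thus ?thesis using f0[of H0] by (meson order_trans order_refl)
  qed
  moreover have "\<beta>' \<in> ?S" if "\<beta> \<in> ?S" "\<beta> \<le> \<beta>'" for \<beta> \<beta>'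
  proof -
    from that(1) obtain H0 where "\<forall>H\<ge>H0. ?f H \<le> \<beta>" by auto
    hence "\<forall>H\<ge>H0. ?f H \<le> \<beta>'" using that(2) by (meson order_trans)
    thus ?thesis by auto
  qed
  ultimately have "Inf ?S + \<eta> \<in> ?S" using inf_props(4)[of 1 ?S \<eta>] eta by blast
  thus ?thesis by (simp only: psi.simps mem_Collect_eq)
qed

lemma Qsum_flip:
  "Qsum N M (\<lambda>n m. \<Prod>i<k. g i (a i * n + b i * m + c i)) =
   Qsum N M (\<lambda>n m. \<Prod>i<k. g i (a i * n + (- b i) * m + (c i + b i * (int M + 1))))"
proof -
  have "(\<Sum>m\<in>{1..M}. \<Prod>i<k. g i (a i * n + b i * int m + c i)) =
        (\<Sum>m\<in>{1..M}. \<Prod>i<k. g i (a i * n + (- b i) * int m + (c i + b i * (int M + 1))))" for n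
  proof -
    have "(\<Sum>m\<in>{1..M}. \<Prod>i<k. g i (a i * n + b i * int m + c i)) =
          (\<Sum>m\<in>{1..M}. \<Prod>i<k. g i (a i * n + b i * int (M + 1 - m) + c i))"
      by (subst sum.atLeastAtMost_rev) simp
    also have "\<dots> = (\<Sum>m\<in>{1..M}. \<Prod>i<k. g i (a i * n + (- b i) * int m + (c i + b i * (int M + 1))))"
    proof (rule sum.cong[OF refl], rule prod.cong[OF refl])
      fix m i assume "m \<in> {1..M}"
      hence "int (M + 1 - m) = int M + 1 - int m" by auto
      thus "g i (a i * n + b i * int (M + 1 - m) + c i) = g i (a i * n + - b i * int m + (c i + b i * (int M + 1)))"
        by (simp add: algebra_simps)
    qed
    finally show ?thesis .
  qed
  thus ?thesis unfolding Qsum_def by simp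
qed

lemma QP_flip:
  assumes "QP k a (\<lambda>i. - b i)"
  shows "QP k a b"
proof -
  from assms obtain bs C where bsC: "C \<ge> 0" "bs \<noteq> []" "\<forall>x\<in>set bs. x > 0"
    and H: "\<forall>g::nat \<Rightarrow> int \<Rightarrow> real. (\<forall>i y. \<bar>g i y\<bar> \<le> 1) \<longrightarrow>
       (\<forall>\<epsilon>>0. \<exists>M0. \<forall>M\<ge>M0. \<forall>c::nat \<Rightarrow> int. \<exists>N0. \<forall>N\<ge>N0.
          Qsum N M (\<lambda>n m. \<Prod>i<k. g i (a i * n + (- b i) * m + c i)) \<le> C * psi bs (g 0) + \<epsilon>)"
    unfolding QP_def by (elim exE conjE) blast
  show ?thesis unfolding QP_def
  proof (rule exI[of _ bs], rule exI[of _ C], intro conjI allI impI)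
    fix g :: "nat \<Rightarrow> int \<Rightarrow> real" and \<epsilon> :: real
    assume g: "\<forall>i y. \<bar>g i y\<bar> \<le> 1" and e: "\<epsilon> > 0"
    from H g e have "\<exists>M0. \<forall>M\<ge>M0. \<forall>c::nat \<Rightarrow> int. \<exists>N0. \<forall>N\<ge>N0.
          Qsum N M (\<lambda>n m. \<Prod>i<k. g i (a i * n + (- b i) * m + c i)) \<le> C * psi bs (g 0) + \<epsilon>" by simp
    then obtain M0 where M0: "\<forall>M\<ge>M0. \<forall>c::nat \<Rightarrow> int. \<exists>N0. \<forall>N\<ge>N0.
          Qsum N M (\<lambda>n m. \<Prod>i<k. g i (a i * n + (- b i) * m + c i)) \<le> C * psi bs (g 0) + \<epsilon>" by (elim exE)
    show "\<exists>M0. \<forall>M\<ge>M0. \<forall>c::nat \<Rightarrow> int. \<exists>N0. \<forall>N\<ge>N0.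
          Qsum N M (\<lambda>n m. \<Prod>i<k. g i (a i * n + b i * m + c i)) \<le> C * psi bs (g 0) + \<epsilon>"
    proof (rule exI[of _ M0], intro allI impI)
      fix M c assume "M \<ge> M0"
      with M0 have "\<exists>N0. \<forall>N\<ge>N0. Qsum N M (\<lambda>n m. \<Prod>i<k. g i (a i * n + (- b i) * m + (c i + b i * (int M + 1)))) \<le> C * psi bs (g 0) + \<epsilon>"
        by simp
      then obtain N0 where N0: "\<forall>N\<ge>N0. Qsum N M (\<lambda>n m. \<Prod>i<k. g i (a i * n + (- b i) * m + (c i + b i * (int M + 1)))) \<le> C * psi bs (g 0) + \<epsilon>"
        by (elim exE)
      show "\<exists>N0. \<forall>N\<ge>N0. Qsum N M (\<lambda>n m. \<Prod>i<k. g i (a i * n + b i * m + c i)) \<le> C * psi bs (g 0) + \<epsilon>"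
      proof (rule exI[of _ N0], intro allI impI)
        fix N assume "N \<ge> N0"
        thus "Qsum N M (\<lambda>n m. \<Prod>i<k. g i (a i * n + b i * m + c i)) \<le> C * psi bs (g 0) + \<epsilon>"
          using N0 by (simp only: Qsum_flip[where N=N and M=M and k=k and g=g and a=a and b=b and c=c])
      qed
    qed
  qed (use bsC in auto)
qed

lemma sum_affine_bound:
  fixes W :: "int \<Rightarrow> real" and A c0 :: int
  assumes A: "A \<ge> 1" and W0: "\<And>y. 0 \<le> W y" and W1: "\<And>y. W y \<le> 1"
  shows "(\<Sum>n\<in>{1..N}. W (A * int n + c0)) \<le> (\<Sum>y\<in>{1..nat (A * int N + c0)}. W (int y)) + real_of_int \<bar>c0\<bar>"
proof -
  define P1 where "P1 = {n\<in>{1..N}. A * int n + c0 \<ge> 1}"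
  define P2 where "P2 = {n\<in>{1..N}. A * int n + c0 < 1}"
  have un: "{1..N} = P1 \<union> P2" and dj: "P1 \<inter> P2 = {}" unfolding P1_def P2_def by auto
  have fin: "finite P1" "finite P2" unfolding P1_def P2_def by auto
  have split: "(\<Sum>n\<in>{1..N}. W (A * int n + c0)) = (\<Sum>n\<in>P1. W (A * int n + c0)) + (\<Sum>n\<in>P2. W (A * int n + c0))"
    unfolding un using fin dj by (rule sum.union_disjoint)
  define \<phi> where "\<phi> n = nat (A * int n + c0)" for n
  have inj: "inj_on \<phi> P1"
  proof (rule inj_onI)
    fix x y assume "x \<in> P1" "y \<in> P1" "\<phi> x = \<phi> y"
    hence "nat (A * int x + c0) = nat (A * int y + c0)" "A * int x + c0 \<ge> 1" "A * int y + c0 \<ge> 1"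
      unfolding \<phi>_def P1_def by auto
    hence "A * int x + c0 = A * int y + c0" by (subst (asm) eq_nat_nat_iff) auto
    hence "A * int x = A * int y" by simp
    thus "x = y" using A by simp
  qed
  have "(\<Sum>n\<in>P1. W (A * int n + c0)) = (\<Sum>n\<in>P1. W (int (\<phi> n)))"
    by (rule sum.cong) (auto simp: \<phi>_def P1_def)
  also have "\<dots> = (\<Sum>y\<in>\<phi> ` P1. W (int y))" using sum.reindex[OF inj, of "\<lambda>y. W (int y)"] by simp
  also have "\<dots> \<le> (\<Sum>y\<in>{1..nat (A * int N + c0)}. W (int y))"
  proof (rule sum_mono2)
    show "\<phi> ` P1 \<subseteq> {1..nat (A * int N + c0)}"
    proof
      fix y assume "y \<in> \<phi> ` P1"
      then obtain n where n: "n \<in> P1" "y = \<phi> n" by auto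
      have "A * int n \<le> A * int N" using n(1) A unfolding P1_def by (auto intro: mult_left_mono)
      thus "y \<in> {1..nat (A * int N + c0)}" using n unfolding P1_def \<phi>_def by auto
    qed
  qed (use W0 in auto)
  finally have s1: "(\<Sum>n\<in>P1. W (A * int n + c0)) \<le> (\<Sum>y\<in>{1..nat (A * int N + c0)}. W (int y))" .
  have "(\<Sum>n\<in>P2. W (A * int n + c0)) \<le> (\<Sum>n\<in>P2. 1)" by (rule sum_mono) (rule W1)
  also have "\<dots> = real (card P2)" by simp
  also have "card P2 \<le> card {1..nat \<bar>c0\<bar>}"
  proof (rule card_mono)
    show "P2 \<subseteq> {1..nat \<bar>c0\<bar>}"
    proof
      fix n assume "n \<in> P2"
      hence n: "n \<ge> 1" "A * int n + c0 < 1" unfolding P2_def by auto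
      have "int n \<le> A * int n" using A n(1) by (simp add: mult_le_cancel_right1)
      hence "int n \<le> \<bar>c0\<bar>" using n(2) by linarith
      thus "n \<in> {1..nat \<bar>c0\<bar>}" using n(1) by auto
    qed
  qed simp
  finally have s2: "(\<Sum>n\<in>P2. W (A * int n + c0)) \<le> real_of_int \<bar>c0\<bar>" by simp
  show ?thesis using split s1 s2 by linarith
qed

lemma QP_base_pos:
  assumes A: "a 0 > 0" and B: "b 0 > 0"
  shows "QP 1 a b"
  unfolding QP_def
proof (rule exI[of _ "[nat (b 0)]"], rule exI[of _ "real_of_int (a 0)"], intro conjI allI impI)
  show "real_of_int (a 0) \<ge> 0" using A by simp
  show "[nat (b 0)] \<noteq> []" by simp
  show "\<forall>x\<in>set [nat (b 0)]. x > 0" using B by simp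
  fix g :: "nat \<Rightarrow> int \<Rightarrow> real" and \<epsilon> :: real
  assume g: "\<forall>i y. \<bar>g i y\<bar> \<le> 1" and e: "\<epsilon> > 0"
  define G where "G = g 0"
  define P where "P = psi [nat (b 0)] G"
  define Ar where "Ar = real_of_int (a 0)"
  have Ar: "Ar \<ge> 1" using A unfolding Ar_def by simp
  define \<eta> where "\<eta> = min 1 (\<epsilon> / (2 * Ar))"
  have eta: "\<eta> > 0" "\<eta> \<le> 1" "Ar * \<eta> \<le> \<epsilon> / 2" using e Ar unfolding \<eta>_def by (auto simp: field_simps min_def)
  have Gb: "\<And>y. \<bar>G y\<bar> \<le> 1" using g unfolding G_def by auto
  have "0 \<le> P \<and> P \<le> 1" unfolding P_def by (rule psi_bounds) (rule Gb)
  hence Pb: "0 \<le> P" "P \<le> 1" by auto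
  obtain M0 where M0: "\<forall>M\<ge>M0. \<exists>N0. \<forall>N\<ge>N0. Qsum N M (\<lambda>y m. G (y + int (nat (b 0)) * m)) \<le> P + \<eta>"
    using psi_base_approx[where g=G and \<eta>=\<eta> and b="nat (b 0)", OF Gb eta(1)] unfolding P_def by blast
  show "\<exists>M0. \<forall>M\<ge>M0. \<forall>c::nat \<Rightarrow> int. \<exists>N0. \<forall>N\<ge>N0.
          Qsum N M (\<lambda>n m. \<Prod>i<1. g i (a i * n + b i * m + c i)) \<le> real_of_int (a 0) * psi [nat (b 0)] (g 0) + \<epsilon>"
  proof (rule exI[of _ M0], intro allI impI)
    fix M :: nat and c :: "nat \<Rightarrow> int" assume "M \<ge> M0"
    with M0 obtain N1 where N1: "\<forall>N\<ge>N1. Qsum N M (\<lambda>y m. G (y + int (nat (b 0)) * m)) \<le> P + \<eta>" by blast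
    define c0 where "c0 = c 0"
    define N0 where "N0 = N1 + nat \<bar>c0\<bar> + 1 + nat \<lceil>6 * \<bar>c0\<bar> / \<epsilon>\<rceil>"
    show "\<exists>N0. \<forall>N\<ge>N0. Qsum N M (\<lambda>n m. \<Prod>i<1. g i (a i * n + b i * m + c i)) \<le> real_of_int (a 0) * psi [nat (b 0)] (g 0) + \<epsilon>"
    proof (rule exI[of _ N0], intro allI impI)
      fix N assume N: "N \<ge> N0"
      define W where "W y = ((\<Sum>m\<in>{1..M}. G (y + b 0 * int m)) / real M)^2" for y
      have W0: "0 \<le> W y" for y unfolding W_def by simp
      have W1: "W y \<le> 1" for y
      proof -
        have "Qsum 1 M (\<lambda>n m. G (y + b 0 * m)) \<le> 1" by (rule Qsum_le1) (rule Gb)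
        thus ?thesis unfolding Qsum_def W_def by simp
      qed
      define Y where "Y = nat (a 0 * int N + c0)"
      have Npos: "N \<ge> 1" using N unfolding N0_def by simp
      have h1: "int N \<le> a 0 * int N" using A by (simp add: mult_le_cancel_right1)
      have h2: "int N1 + \<bar>c0\<bar> + 1 \<le> int N" using N unfolding N0_def by auto
      have h3: "int N1 + 1 \<le> a 0 * int N + c0" using h1 h2 by linarith
      have YN: "Y \<ge> N1" "Y \<ge> 1" unfolding Y_def using h3 by (simp_all add: le_nat_iff)
      have Yle: "real Y \<le> Ar * real N + real_of_int \<bar>c0\<bar>"
      proof -
        have "a 0 * int N + c0 \<ge> 0" using YN unfolding Y_def by linarith
        hence "real Y = real_of_int (a 0 * int N + c0)" unfolding Y_def by simp
        thus ?thesis unfolding Ar_def by simp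
      qed
      have Q_eq: "Qsum N M (\<lambda>n m. \<Prod>i<1. g i (a i * n + b i * m + c i)) = (\<Sum>n\<in>{1..N}. W (a 0 * int n + c0)) / real N"
        unfolding Qsum_def W_def G_def c0_def by (simp add: algebra_simps)
      have QY: "(\<Sum>y\<in>{1..Y}. W (int y)) = real Y * Qsum Y M (\<lambda>y m. G (y + int (nat (b 0)) * m))"
        using YN B unfolding Qsum_def W_def by simp
      have "(\<Sum>n\<in>{1..N}. W (a 0 * int n + c0)) \<le> (\<Sum>y\<in>{1..Y}. W (int y)) + real_of_int \<bar>c0\<bar>"
        unfolding Y_def using A W0 W1 by (intro sum_affine_bound) auto
      also have "\<dots> \<le> real Y * (P + \<eta>) + real_of_int \<bar>c0\<bar>"
        unfolding QY using N1 YN by (intro add_right_mono mult_left_mono) auto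
      also have "\<dots> \<le> (Ar * real N + real_of_int \<bar>c0\<bar>) * (P + \<eta>) + real_of_int \<bar>c0\<bar>"
        using Yle Pb eta by (intro add_right_mono mult_right_mono) auto
      finally have S: "(\<Sum>n\<in>{1..N}. W (a 0 * int n + c0)) \<le> (Ar * real N + real_of_int \<bar>c0\<bar>) * (P + \<eta>) + real_of_int \<bar>c0\<bar>" .
      have Nr: "real N > 0" using Npos by simp
      have "(\<Sum>n\<in>{1..N}. W (a 0 * int n + c0)) / real N \<le> ((Ar * real N + real_of_int \<bar>c0\<bar>) * (P + \<eta>) + real_of_int \<bar>c0\<bar>) / real N"
        using S Nr by (simp add: divide_right_mono)
      also have "\<dots> = Ar * P + Ar * \<eta> + real_of_int \<bar>c0\<bar> * (P + \<eta> + 1) / real N"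
        using Nr by (simp add: field_simps)
      also have "\<dots> \<le> Ar * P + \<epsilon> / 2 + \<epsilon> / 2"
      proof -
        have "real_of_int \<bar>c0\<bar> * (P + \<eta> + 1) \<le> real_of_int \<bar>c0\<bar> * 3" using Pb eta by (intro mult_left_mono) auto
        also have "\<dots> \<le> \<epsilon> / 2 * real N"
        proof -
          have "6 * \<bar>c0\<bar> / \<epsilon> \<le> real N"
          proof -
            have "6 * \<bar>c0\<bar> / \<epsilon> \<le> real (nat \<lceil>6 * \<bar>c0\<bar> / \<epsilon>\<rceil>)" by linarith
            also have "\<dots> \<le> real N"
            proof -
              have "nat \<lceil>6 * \<bar>c0\<bar> / \<epsilon>\<rceil> \<le> N" using N unfolding N0_def by linarith
              thus ?thesis by (simp only: of_nat_le_iff)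
            qed
            finally show ?thesis .
          qed
          thus ?thesis using e by (simp add: field_simps)
        qed
        finally have "real_of_int \<bar>c0\<bar> * (P + \<eta> + 1) / real N \<le> \<epsilon> / 2" using Nr by (simp add: field_simps)
        thus ?thesis using eta by linarith
      qed
      finally show "Qsum N M (\<lambda>n m. \<Prod>i<1. g i (a i * n + b i * m + c i)) \<le> real_of_int (a 0) * psi [nat (b 0)] (g 0) + \<epsilon>"
        unfolding Q_eq P_def Ar_def G_def by simp
    qed
  qed
qed

lemma shift2D:
  fixes X :: "int \<Rightarrow> int \<Rightarrow> real"
  assumes X: "\<And>x y. \<bar>X x y\<bar> \<le> 1"
  shows "\<bar>(\<Sum>n\<in>{1..N}. \<Sum>m\<in>{1..M}. X (int n + p) (int m + q)) - (\<Sum>n\<in>{1..N}. \<Sum>m\<in>{1..M}. X (int n) (int m))\<bar>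
         \<le> 2 * real_of_int \<bar>p\<bar> * M + 2 * real_of_int \<bar>q\<bar> * N"
proof -
  have A: "\<bar>(\<Sum>n\<in>{1..N}. \<Sum>m\<in>{1..M}. X (int n + p) (int m + q)) - (\<Sum>n\<in>{1..N}. \<Sum>m\<in>{1..M}. X (int n) (int m + q))\<bar>
         \<le> 2 * real_of_int \<bar>p\<bar> * M"
  proof -
    have "(\<Sum>n\<in>{1..N}. \<Sum>m\<in>{1..M}. X (int n + p) (int m + q)) - (\<Sum>n\<in>{1..N}. \<Sum>m\<in>{1..M}. X (int n) (int m + q))
       = (\<Sum>m\<in>{1..M}. (\<Sum>n\<in>{1..N}. X (int n + p) (int m + q)) - (\<Sum>n\<in>{1..N}. X (int n) (int m + q)))"
    proof -
      have "(\<Sum>n\<in>{1..N}. \<Sum>m\<in>{1..M}. X (int n + p) (int m + q)) = (\<Sum>m\<in>{1..M}. \<Sum>n\<in>{1..N}. X (int n + p) (int m + q))"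
        by (rule sum.swap)
      moreover have "(\<Sum>n\<in>{1..N}. \<Sum>m\<in>{1..M}. X (int n) (int m + q)) = (\<Sum>m\<in>{1..M}. \<Sum>n\<in>{1..N}. X (int n) (int m + q))"
        by (rule sum.swap)
      ultimately show ?thesis by (simp add: sum_subtractf)
    qed
    also have "\<bar>\<dots>\<bar> \<le> (\<Sum>m\<in>{1..M}. \<bar>(\<Sum>n\<in>{1..N}. X (int n + p) (int m + q)) - (\<Sum>n\<in>{1..N}. X (int n) (int m + q))\<bar>)"
      by (rule sum_abs)
    also have "\<dots> \<le> (\<Sum>m\<in>{1..M}. 2 * real_of_int \<bar>p\<bar>)"
    proof (rule sum_mono)
      fix m
      show "\<bar>(\<Sum>n\<in>{1..N}. X (int n + p) (int m + q)) - (\<Sum>n\<in>{1..N}. X (int n) (int m + q))\<bar> \<le> 2 * real_of_int \<bar>p\<bar>"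
        using shift1[where f="\<lambda>x. X x (int m + q)" and N=N and p=p] X by simp
    qed
    finally show ?thesis by (simp add: mult_ac)
  qed
  have B: "\<bar>(\<Sum>n\<in>{1..N}. \<Sum>m\<in>{1..M}. X (int n) (int m + q)) - (\<Sum>n\<in>{1..N}. \<Sum>m\<in>{1..M}. X (int n) (int m))\<bar>
         \<le> 2 * real_of_int \<bar>q\<bar> * N"
  proof -
    have "(\<Sum>n\<in>{1..N}. \<Sum>m\<in>{1..M}. X (int n) (int m + q)) - (\<Sum>n\<in>{1..N}. \<Sum>m\<in>{1..M}. X (int n) (int m))
       = (\<Sum>n\<in>{1..N}. (\<Sum>m\<in>{1..M}. X (int n) (int m + q)) - (\<Sum>m\<in>{1..M}. X (int n) (int m)))"
      by (simp add: sum_subtractf)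
    also have "\<bar>\<dots>\<bar> \<le> (\<Sum>n\<in>{1..N}. \<bar>(\<Sum>m\<in>{1..M}. X (int n) (int m + q)) - (\<Sum>m\<in>{1..M}. X (int n) (int m))\<bar>)"
      by (rule sum_abs)
    also have "\<dots> \<le> (\<Sum>n\<in>{1..N}. 2 * real_of_int \<bar>q\<bar>)"
    proof (rule sum_mono)
      fix n
      show "\<bar>(\<Sum>m\<in>{1..M}. X (int n) (int m + q)) - (\<Sum>m\<in>{1..M}. X (int n) (int m))\<bar> \<le> 2 * real_of_int \<bar>q\<bar>"
        using shift1[where f="\<lambda>y. X (int n) y" and N=M and p=q] X by simp
    qed
    finally show ?thesis by (simp add: mult_ac)
  qed
  show ?thesis using A B by linarith
qed

lemma vdC_avg:
  fixes u :: "int \<Rightarrow> int \<Rightarrow> real"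
  assumes u: "\<And>x y. \<bar>u x y\<bar> \<le> 1" and H: "1 \<le> H" "H \<le> M"
  shows "Qsum N M u \<le> (\<Sum>h<H. \<Sum>h'<H. (\<Sum>n\<in>{1..N}. \<Sum>m\<in>{1..M}. u (int n) (int m + int h) * u (int n) (int m + int h')) / (real N * real M)) / (real H)^2
        + 4 * real H / real M"
proof (cases "N = 0")
  case True
  then show ?thesis unfolding Qsum_def by simp
next
  case False
  hence Np: "real N > 0" by simp
  have "Qsum N M u \<le> (\<Sum>n\<in>{1..N}. (\<Sum>h<H. \<Sum>h'<H. (\<Sum>m\<in>{1..M}. u (int n) (int m + int h) * u (int n) (int m + int h')) / real M) / (real H)^2
        + 4 * real H / real M) / real N"
    unfolding Qsum_def using Np by (intro divide_right_mono sum_mono vdC u H) auto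
  also have "\<dots> = (\<Sum>h<H. \<Sum>h'<H. (\<Sum>n\<in>{1..N}. \<Sum>m\<in>{1..M}. u (int n) (int m + int h) * u (int n) (int m + int h')) / (real N * real M)) / (real H)^2
        + 4 * real H / real M"
  proof -
    have "(\<Sum>n\<in>{1..N}. (\<Sum>h<H. \<Sum>h'<H. (\<Sum>m\<in>{1..M}. u (int n) (int m + int h) * u (int n) (int m + int h')) / real M))
       = (\<Sum>h<H. \<Sum>h'<H. (\<Sum>n\<in>{1..N}. \<Sum>m\<in>{1..M}. u (int n) (int m + int h) * u (int n) (int m + int h')) / real M)"
    proof -
      have "(\<Sum>n\<in>{1..N}. (\<Sum>h<H. \<Sum>h'<H. (\<Sum>m\<in>{1..M}. u (int n) (int m + int h) * u (int n) (int m + int h')) / real M))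
         = (\<Sum>h<H. \<Sum>n\<in>{1..N}. \<Sum>h'<H. (\<Sum>m\<in>{1..M}. u (int n) (int m + int h) * u (int n) (int m + int h')) / real M)"
        by (rule sum.swap)
      also have "\<dots> = (\<Sum>h<H. \<Sum>h'<H. \<Sum>n\<in>{1..N}. (\<Sum>m\<in>{1..M}. u (int n) (int m + int h) * u (int n) (int m + int h')) / real M)"
        by (rule sum.cong[OF refl], rule sum.swap)
      also have "\<dots> = (\<Sum>h<H. \<Sum>h'<H. (\<Sum>n\<in>{1..N}. \<Sum>m\<in>{1..M}. u (int n) (int m + int h) * u (int n) (int m + int h')) / real M)"
        by (simp add: sum_divide_distrib)
      finally show ?thesis .
    qed
    moreover have "(\<Sum>n\<in>{1..N}. (\<Sum>h<H. \<Sum>h'<H. (\<Sum>m\<in>{1..M}. u (int n) (int m + int h) * u (int n) (int m + int h')) / real M) / (real H)^2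
        + 4 * real H / real M) / real N = (\<Sum>n\<in>{1..N}. (\<Sum>h<H. \<Sum>h'<H. (\<Sum>m\<in>{1..M}. u (int n) (int m + int h) * u (int n) (int m + int h')) / real M)) / (real H)^2 / real N
        + 4 * real H / real M"
      using Np by (simp add: sum.distrib sum_divide_distrib[symmetric] add_divide_distrib)
    moreover have "(\<Sum>h<H. \<Sum>h'<H. (\<Sum>n\<in>{1..N}. \<Sum>m\<in>{1..M}. u (int n) (int m + int h) * u (int n) (int m + int h')) / real M) / (real H)^2 / real N
       = (\<Sum>h<H. \<Sum>h'<H. (\<Sum>n\<in>{1..N}. \<Sum>m\<in>{1..M}. u (int n) (int m + int h) * u (int n) (int m + int h')) / (real N * real M)) / (real H)^2"
      by (simp add: sum_divide_distrib[symmetric] field_simps)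
    ultimately show ?thesis by simp
  qed
  finally show ?thesis .
qed

lemma prod_abs_le1:
  fixes f :: "nat \<Rightarrow> real"
  assumes "\<And>i. \<bar>f i\<bar> \<le> 1"
  shows "\<bar>\<Prod>i\<in>A. f i\<bar> \<le> 1"
proof -
  have "\<bar>\<Prod>i\<in>A. f i\<bar> = (\<Prod>i\<in>A. \<bar>f i\<bar>)" by (simp add: abs_prod)
  also have "\<dots> \<le> 1" using assms by (intro prod_le_1) auto
  finally show ?thesis .
qed

lemma double_CS:
  fixes Y :: "nat \<Rightarrow> nat \<Rightarrow> real"
  shows "(\<Sum>n\<in>{1..N}. \<Sum>m\<in>{1..M}. \<bar>Y n m\<bar>) \<le> sqrt (real N * real M * (\<Sum>n\<in>{1..N}. \<Sum>m\<in>{1..M}. (Y n m)^2))"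
proof -
  have e1: "(\<Sum>n\<in>{1..N}. \<Sum>m\<in>{1..M}. \<bar>Y n m\<bar>) = (\<Sum>p\<in>{1..N} \<times> {1..M}. \<bar>Y (fst p) (snd p)\<bar>)"
    by (simp add: sum.cartesian_product split_def)
  have e2: "(\<Sum>n\<in>{1..N}. \<Sum>m\<in>{1..M}. (Y n m)^2) = (\<Sum>p\<in>{1..N} \<times> {1..M}. (\<bar>Y (fst p) (snd p)\<bar>)^2)"
    by (simp add: sum.cartesian_product split_def)
  have "(\<Sum>p\<in>{1..N} \<times> {1..M}. \<bar>Y (fst p) (snd p)\<bar>)^2 \<le> (\<Sum>p\<in>{1..N} \<times> {1..M}. (\<bar>Y (fst p) (snd p)\<bar>)^2) * real (card ({1..N} \<times> {1..M}))"
    by (rule sum_squared_le_sum_of_squares)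
  also have "\<dots> = real N * real M * (\<Sum>p\<in>{1..N} \<times> {1..M}. (\<bar>Y (fst p) (snd p)\<bar>)^2)"
    by (simp add: card_cartesian_product)
  finally show ?thesis unfolding e1 e2 by (intro real_le_rsqrt) 
qed

lemma shift_CS:
  fixes G :: "nat \<Rightarrow> int \<Rightarrow> real" and a b c :: "nat \<Rightarrow> int"
  assumes G: "\<And>i y. \<bar>G i y\<bar> \<le> 1" and T: "T \<ge> 1" and NM: "N \<ge> 1" "M \<ge> 1"
  shows "\<bar>\<Sum>n\<in>{1..N}. \<Sum>m\<in>{1..M}. \<Prod>i<Suc k. G i (a i * int n + b i * int m + c i)\<bar> / (real N * real M)
   \<le> sqrt ((\<Sum>m\<in>{1..M}. Qsum N T (\<lambda>n t. \<Prod>i<k. G i (a i * n + (b i * a k - a i * b k) * t + (b i * int m + c i)))) / real M)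
     + 2 * real_of_int \<bar>b k\<bar> * real T / real N + 2 * real_of_int \<bar>a k\<bar> * real T / real M"
proof -
  define d where "d i = b i * a k - a i * b k" for i
  define X where "X x y = (\<Prod>i<Suc k. G i (a i * x + b i * y + c i))" for x y
  have Xb: "\<bar>X x y\<bar> \<le> 1" for x y unfolding X_def by (rule prod_abs_le1) (rule G)
  define Z where "Z t x y = (\<Prod>i<Suc k. G i (a i * x + b i * y + c i + d i * t))" for t x y
  have XZ: "X (x - b k * t) (y + a k * t) = Z t x y" for t x y
    unfolding X_def Z_def d_def by (rule prod.cong) (auto simp: algebra_simps)
  define E0 where "E0 = 2 * real_of_int \<bar>b k\<bar> * real T * real M + 2 * real_of_int \<bar>a k\<bar> * real T * real N"
  define SX where "SX = (\<Sum>n\<in>{1..N}. \<Sum>m\<in>{1..M}. X (int n) (int m))"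
  define SZ where "SZ t = (\<Sum>n\<in>{1..N}. \<Sum>m\<in>{1..M}. Z (int t) (int n) (int m))" for t
  have dZ: "\<bar>SZ t - SX\<bar> \<le> E0" if "t \<in> {1..T}" for t
  proof -
    have "\<bar>SZ t - SX\<bar> \<le> 2 * real_of_int \<bar>- b k * int t\<bar> * real M + 2 * real_of_int \<bar>a k * int t\<bar> * real N"
      unfolding SZ_def SX_def XZ[symmetric] using shift2D[where X=X and N=N and M=M and p="- b k * int t" and q="a k * int t", OF Xb]
      by (simp add: algebra_simps)
    also have "\<dots> \<le> E0" unfolding E0_def using that
      by (intro add_mono mult_right_mono) (auto simp: abs_mult intro!: mult_left_mono)
    finally show ?thesis .
  qed
  have Tp: "real T > 0" using T by simp
  define Y where "Y n m = (\<Sum>t\<in>{1..T}. \<Prod>i<k. G i (a i * int n + d i * int t + (b i * int m + c i))) / real T" for n m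
  have avg: "(\<Sum>t\<in>{1..T}. SZ t) / real T = (\<Sum>n\<in>{1..N}. \<Sum>m\<in>{1..M}. G k (a k * int n + b k * int m + c k) * Y n m)"
  proof -
    have "(\<Sum>t\<in>{1..T}. SZ t) = (\<Sum>n\<in>{1..N}. \<Sum>m\<in>{1..M}. \<Sum>t\<in>{1..T}. Z (int t) (int n) (int m))"
    proof -
      have "(\<Sum>t\<in>{1..T}. SZ t) = (\<Sum>n\<in>{1..N}. \<Sum>t\<in>{1..T}. \<Sum>m\<in>{1..M}. Z (int t) (int n) (int m))"
        unfolding SZ_def by (rule sum.swap)
      also have "\<dots> = (\<Sum>n\<in>{1..N}. \<Sum>m\<in>{1..M}. \<Sum>t\<in>{1..T}. Z (int t) (int n) (int m))"
        by (rule sum.cong[OF refl], rule sum.swap)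
      finally show ?thesis .
    qed
    also have "\<dots> = (\<Sum>n\<in>{1..N}. \<Sum>m\<in>{1..M}. G k (a k * int n + b k * int m + c k) * (\<Sum>t\<in>{1..T}. \<Prod>i<k. G i (a i * int n + d i * int t + (b i * int m + c i))))"
      unfolding Z_def by (simp add: sum_distrib_left d_def algebra_simps)
    finally show ?thesis unfolding Y_def
      by (simp only: sum_divide_distrib[of _ "{1..N}"] sum_divide_distrib[of _ "{1..M}"] times_divide_eq_right)
  qed
  have "\<bar>SX - (\<Sum>t\<in>{1..T}. SZ t) / real T\<bar> = \<bar>(\<Sum>t\<in>{1..T}. SX - SZ t)\<bar> / real T"
    using Tp by (simp add: sum_subtractf field_simps)
  also have "\<dots> \<le> (\<Sum>t\<in>{1..T}. \<bar>SX - SZ t\<bar>) / real T"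
    using Tp by (intro divide_right_mono sum_abs) auto
  also have "\<dots> \<le> (\<Sum>t\<in>{1..T}. E0) / real T"
    using Tp dZ by (intro divide_right_mono sum_mono) (auto simp: abs_minus_commute)
  also have "\<dots> = E0" using Tp by simp
  finally have e1: "\<bar>SX - (\<Sum>t\<in>{1..T}. SZ t) / real T\<bar> \<le> E0" .
  have "\<bar>(\<Sum>t\<in>{1..T}. SZ t) / real T\<bar> \<le> (\<Sum>n\<in>{1..N}. \<Sum>m\<in>{1..M}. \<bar>Y n m\<bar>)"
  proof -
    have "\<bar>(\<Sum>t\<in>{1..T}. SZ t) / real T\<bar> \<le> (\<Sum>n\<in>{1..N}. \<bar>\<Sum>m\<in>{1..M}. G k (a k * int n + b k * int m + c k) * Y n m\<bar>)"
      unfolding avg by (rule sum_abs)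
    also have "\<dots> \<le> (\<Sum>n\<in>{1..N}. \<Sum>m\<in>{1..M}. \<bar>G k (a k * int n + b k * int m + c k) * Y n m\<bar>)"
      by (intro sum_mono sum_abs)
    also have "\<dots> \<le> (\<Sum>n\<in>{1..N}. \<Sum>m\<in>{1..M}. \<bar>Y n m\<bar>)"
    proof (intro sum_mono)
      fix n m
      have "\<bar>G k (a k * int n + b k * int m + c k)\<bar> * \<bar>Y n m\<bar> \<le> 1 * \<bar>Y n m\<bar>"
        using G by (intro mult_right_mono) auto
      thus "\<bar>G k (a k * int n + b k * int m + c k) * Y n m\<bar> \<le> \<bar>Y n m\<bar>" by (simp add: abs_mult)
    qed
    finally show ?thesis .
  qed
  also have "\<dots> \<le> sqrt (real N * real M * (\<Sum>n\<in>{1..N}. \<Sum>m\<in>{1..M}. (Y n m)^2))" by (rule double_CS)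
  also have "(\<Sum>n\<in>{1..N}. \<Sum>m\<in>{1..M}. (Y n m)^2) = real N * (\<Sum>m\<in>{1..M}. Qsum N T (\<lambda>n t. \<Prod>i<k. G i (a i * n + d i * t + (b i * int m + c i))))"
  proof -
    have "(\<Sum>n\<in>{1..N}. \<Sum>m\<in>{1..M}. (Y n m)^2) = (\<Sum>m\<in>{1..M}. \<Sum>n\<in>{1..N}. (Y n m)^2)" by (rule sum.swap)
    also have "\<dots> = (\<Sum>m\<in>{1..M}. real N * Qsum N T (\<lambda>n t. \<Prod>i<k. G i (a i * n + d i * t + (b i * int m + c i))))"
      unfolding Qsum_def Y_def using NM by simp
    finally show ?thesis by (simp add: sum_distrib_left)
  qed
  finally have e2: "\<bar>(\<Sum>t\<in>{1..T}. SZ t) / real T\<bar> \<le> sqrt (real N * real M * (real N * (\<Sum>m\<in>{1..M}. Qsum N T (\<lambda>n t. \<Prod>i<k. G i (a i * n + d i * t + (b i * int m + c i))))))" .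
  define Q where "Q = (\<Sum>m\<in>{1..M}. Qsum N T (\<lambda>n t. \<Prod>i<k. G i (a i * n + d i * t + (b i * int m + c i))))"
  have Np: "real N > 0" "real M > 0" using NM by auto
  have sq: "sqrt (real N * real M * (real N * Q)) = real N * real M * sqrt (Q / real M)"
  proof -
    have "real N * real M * (real N * Q) = (real N * real M)^2 * (Q / real M)" using Np by (simp add: field_simps power2_eq_square)
    moreover have "sqrt ((real N * real M)^2 * (Q / real M)) = sqrt ((real N * real M)^2) * sqrt (Q / real M)"
      by (rule real_sqrt_mult)
    moreover have "sqrt ((real N * real M)^2) = real N * real M" using Np by simp
    ultimately show ?thesis by simp
  qed
  have "\<bar>SX\<bar> \<le> real N * real M * sqrt (Q / real M) + E0"
    using e1 e2 sq unfolding Q_def by linarith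
  hence "\<bar>SX\<bar> / (real N * real M) \<le> (real N * real M * sqrt (Q / real M) + E0) / (real N * real M)"
    using Np by (simp add: divide_right_mono)
  also have "\<dots> = sqrt (Q / real M) + 2 * real_of_int \<bar>b k\<bar> * real T / real N + 2 * real_of_int \<bar>a k\<bar> * real T / real M"
    unfolding E0_def using Np by (simp add: field_simps)
  finally show ?thesis unfolding SX_def X_def Q_def d_def .
qed

lemma step_core:
  fixes g :: "nat \<Rightarrow> int \<Rightarrow> real" and a b c :: "nat \<Rightarrow> int" and \<psi> :: "nat \<Rightarrow> nat \<Rightarrow> real"
  assumes g: "\<And>i y. \<bar>g i y\<bar> \<le> 1" and H: "1 \<le> H" "H \<le> M" and T: "T \<ge> 1" and N: "N \<ge> 1"
    and C': "C' \<ge> 0" and eta: "\<eta> \<ge> 0" and psi0: "\<And>h h'. \<psi> h h' \<ge> 0"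
    and Qb: "\<And>h h' m. h < H \<Longrightarrow> h' < H \<Longrightarrow> m \<in> {1..M} \<Longrightarrow>
       Qsum N T (\<lambda>n t. \<Prod>i<Suc k. g i (a i * n + (b i * a (Suc k) - a i * b (Suc k)) * t + (b i * int m + c i) + b i * int h)
                              * g i (a i * n + (b i * a (Suc k) - a i * b (Suc k)) * t + (b i * int m + c i) + b i * int h'))
        \<le> C' * \<psi> h h' + \<eta>"
  shows "Qsum N M (\<lambda>n m. \<Prod>i<Suc (Suc k). g i (a i * n + b i * m + c i))
    \<le> (\<Sum>h<H. \<Sum>h'<H. sqrt (C' * \<psi> h h' + \<eta>)) / (real H)^2
       + (2 * real_of_int \<bar>b (Suc k)\<bar> * real T / real N + 2 * real_of_int \<bar>a (Suc k)\<bar> * real T / real M)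
       + 4 * real H / real M"
proof -
  define u where "u x y = (\<Prod>i<Suc (Suc k). g i (a i * x + b i * y + c i))" for x y
  have ub: "\<bar>u x y\<bar> \<le> 1" for x y unfolding u_def by (rule prod_abs_le1) (rule g)
  define Gf where "Gf h h' i y = g i (y + b i * int h) * g i (y + b i * int h')" for h h' :: nat and i y
  have Gfb: "\<bar>Gf h h' i y\<bar> \<le> 1" for h h' i y
  proof -
    have "\<bar>g i (y + b i * int h)\<bar> * \<bar>g i (y + b i * int h')\<bar> \<le> 1" using g by (intro mult_le_one) auto
    thus ?thesis unfolding Gf_def by (simp add: abs_mult)
  qed
  define E where "E = 2 * real_of_int \<bar>b (Suc k)\<bar> * real T / real N + 2 * real_of_int \<bar>a (Suc k)\<bar> * real T / real M"
  have M1: "M \<ge> 1" using H by simp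
  have uu: "u (int n) (int m + int h) * u (int n) (int m + int h') = (\<Prod>i<Suc (Suc k). Gf h h' i (a i * int n + b i * int m + c i))"
    for n m h h' unfolding u_def Gf_def by (simp add: prod.distrib[symmetric] algebra_simps)
  have tm: "(\<Sum>n\<in>{1..N}. \<Sum>m\<in>{1..M}. u (int n) (int m + int h) * u (int n) (int m + int h')) / (real N * real M)
      \<le> sqrt (C' * \<psi> h h' + \<eta>) + E" if hh: "h < H" "h' < H" for h h'
  proof -
    have "(\<Sum>n\<in>{1..N}. \<Sum>m\<in>{1..M}. u (int n) (int m + int h) * u (int n) (int m + int h')) / (real N * real M)
       \<le> \<bar>\<Sum>n\<in>{1..N}. \<Sum>m\<in>{1..M}. \<Prod>i<Suc (Suc k). Gf h h' i (a i * int n + b i * int m + c i)\<bar> / (real N * real M)"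
      unfolding uu using N M1 by (intro divide_right_mono) auto
    also have "\<dots> \<le> sqrt ((\<Sum>m\<in>{1..M}. Qsum N T (\<lambda>n t. \<Prod>i<Suc k. Gf h h' i (a i * n + (b i * a (Suc k) - a i * b (Suc k)) * t + (b i * int m + c i)))) / real M) + E"
      unfolding E_def using shift_CS[OF Gfb[of h h'] T N M1, where k="Suc k" and a=a and b=b and c=c]
      by (simp only: add.assoc)
    also have "(\<Sum>m\<in>{1..M}. Qsum N T (\<lambda>n t. \<Prod>i<Suc k. Gf h h' i (a i * n + (b i * a (Suc k) - a i * b (Suc k)) * t + (b i * int m + c i)))) / real M
        \<le> (\<Sum>m\<in>{1..M}. C' * \<psi> h h' + \<eta>) / real M"
    proof (rule divide_right_mono[OF sum_mono])
      fix m assume m: "m \<in> {1..M}"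
      show "Qsum N T (\<lambda>n t. \<Prod>i<Suc k. Gf h h' i (a i * n + (b i * a (Suc k) - a i * b (Suc k)) * t + (b i * int m + c i))) \<le> C' * \<psi> h h' + \<eta>"
        unfolding Gf_def by (rule Qb[OF hh m])
    qed simp
    also have "\<dots> = C' * \<psi> h h' + \<eta>" using M1 by simp
    finally show ?thesis by simp
  qed
  have "Qsum N M (\<lambda>n m. \<Prod>i<Suc (Suc k). g i (a i * n + b i * m + c i)) = Qsum N M u" unfolding u_def by simp
  also have "\<dots> \<le> (\<Sum>h<H. \<Sum>h'<H. (\<Sum>n\<in>{1..N}. \<Sum>m\<in>{1..M}. u (int n) (int m + int h) * u (int n) (int m + int h')) / (real N * real M)) / (real H)^2
        + 4 * real H / real M" by (rule vdC_avg[OF ub H])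
  also have "(\<Sum>h<H. \<Sum>h'<H. (\<Sum>n\<in>{1..N}. \<Sum>m\<in>{1..M}. u (int n) (int m + int h) * u (int n) (int m + int h')) / (real N * real M))
      \<le> (\<Sum>h<H. \<Sum>h'<H. sqrt (C' * \<psi> h h' + \<eta>) + E)"
    using tm by (intro sum_mono) auto
  also have "\<dots> = (\<Sum>h<H. \<Sum>h'<H. sqrt (C' * \<psi> h h' + \<eta>)) + (real H)^2 * E"
    by (simp add: sum.distrib power2_eq_square)
  finally show ?thesis unfolding E_def using H by (simp add: divide_right_mono add_divide_distrib)
qed

lemma VF_reduce:
  assumes "VF (Suc (Suc k)) a b"
  shows "VF (Suc k) a (\<lambda>i. b i * a (Suc k) - a i * b (Suc k))"
  unfolding VF_def
proof (intro conjI allI impI)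
  fix i assume i: "i < Suc k"
  show "a i > 0" using assms i unfolding VF_def by auto
  have "a i * b (Suc k) - a (Suc k) * b i \<noteq> 0" using assms i unfolding VF_def by auto
  thus "b i * a (Suc k) - a i * b (Suc k) \<noteq> 0" by (simp add: algebra_simps)
next
  fix i j assume ij: "i < Suc k" "j < Suc k" "i \<noteq> j"
  have "a i * b j - a j * b i \<noteq> 0" "a (Suc k) > 0" using assms ij unfolding VF_def by auto
  moreover have "a i * (b j * a (Suc k) - a j * b (Suc k)) - a j * (b i * a (Suc k) - a i * b (Suc k))
      = a (Suc k) * (a i * b j - a j * b i)" by (simp add: algebra_simps)
  ultimately show "a i * (b j * a (Suc k) - a j * b (Suc k)) - a j * (b i * a (Suc k) - a i * b (Suc k)) \<noteq> 0"
    by simp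
qed

lemma sqrt_lin_bound:
  assumes "C' \<ge> 0" "x \<ge> 0" "\<eta> \<ge> 0"
  shows "sqrt (C' * x + \<eta>) \<le> sqrt C' * sqrt x + sqrt \<eta>"
proof -
  have "sqrt (C' * x + \<eta>) \<le> sqrt (C' * x) + sqrt \<eta>" using assms by (intro sqrt_add_le_add_sqrt) auto
  thus ?thesis by (simp add: real_sqrt_mult)
qed

lemma QP_step_pos:
  assumes VF: "VF (Suc (Suc k)) a b" and b0: "b 0 > 0" and IH: "QP (Suc k) a (\<lambda>i. b i * a (Suc k) - a i * b (Suc k))"
  shows "QP (Suc (Suc k)) a b"
proof -
  define d where "d i = b i * a (Suc k) - a i * b (Suc k)" for i
  from IH obtain bs' C' where C'0: "C' \<ge> 0" and bsne: "bs' \<noteq> []" and bspos: "\<forall>x\<in>set bs'. x > 0"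
    and IHb: "\<forall>G::nat\<Rightarrow>int\<Rightarrow>real. (\<forall>i y. \<bar>G i y\<bar> \<le> 1) \<longrightarrow> (\<forall>\<epsilon>>0. \<exists>M0. \<forall>M\<ge>M0. \<forall>c::nat\<Rightarrow>int. \<exists>N0. \<forall>N\<ge>N0.
        Qsum N M (\<lambda>n m. \<Prod>i<Suc k. G i (a i * n + d i * m + c i)) \<le> C' * psi bs' (G 0) + \<epsilon>)"
    unfolding QP_def d_def by (elim exE conjE) blast
  obtain b1 bs1 where bs': "bs' = b1 # bs1" using bsne by (cases bs') auto
  define B0 where "B0 = nat (b 0)"
  have B0: "int B0 = b 0" using b0 unfolding B0_def by simp
  show ?thesis unfolding QP_def
  proof (rule exI[of _ "B0 # bs'"], rule exI[of _ "sqrt C'"], intro conjI allI impI)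
    show "sqrt C' \<ge> 0" using C'0 by simp
    show "B0 # bs' \<noteq> []" by simp
    show "\<forall>x\<in>set (B0 # bs'). x > 0" using bspos b0 unfolding B0_def by auto
    fix g :: "nat \<Rightarrow> int \<Rightarrow> real" and \<epsilon> :: real
    assume g: "\<forall>i y. \<bar>g i y\<bar> \<le> 1" and e: "\<epsilon> > 0"
    define s where "s = sqrt C'"
    have s0: "s \<ge> 0" unfolding s_def using C'0 by simp
    define \<eta> where "\<eta> = min 1 ((\<epsilon> / (s + 6))^2)"
    have eta: "\<eta> > 0" "\<eta> \<le> 1" using e s0 unfolding \<eta>_def by auto
    have eta3: "sqrt \<eta> \<le> \<epsilon> / (s + 6)"
    proof -
      have "sqrt \<eta> \<le> sqrt ((\<epsilon> / (s + 6))^2)" unfolding \<eta>_def by (intro real_sqrt_le_mono) auto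
      also have "\<dots> = \<epsilon> / (s + 6)" using e s0 by simp
      finally show ?thesis .
    qed
    have eta4: "\<eta> \<le> sqrt \<eta>" using eta by (simp add: real_le_rsqrt power2_eq_square mult_le_cancel_left1)
    define P where "P = psi (B0 # bs') (g 0)"
    have gb: "\<And>i y. \<bar>g i y\<bar> \<le> 1" using g by auto
    define Gf where "Gf h h' i y = g i (y + b i * int h) * g i (y + b i * int h')" for h h' :: nat and i y
    have Gfb: "\<forall>i y. \<bar>Gf h h' i y\<bar> \<le> 1" for h h'
    proof (intro allI)
      fix i y
      have "\<bar>g i (y + b i * int h)\<bar> * \<bar>g i (y + b i * int h')\<bar> \<le> 1" using gb by (intro mult_le_one) auto
      thus "\<bar>Gf h h' i y\<bar> \<le> 1" unfolding Gf_def by (simp add: abs_mult)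
    qed
    have g0b: "\<And>y. \<bar>g 0 y\<bar> \<le> 1" using gb by auto
    obtain H0 where H0: "\<forall>H\<ge>H0. (\<Sum>h<H. \<Sum>h'<H. sqrt (psi bs' (\<lambda>y. g 0 (y + int B0 * int h) * g 0 (y + int B0 * int h')))) / (real H)^2 \<le> P + \<eta>"
      using psi_rec_approx[where g="g 0" and \<eta>=\<eta> and b=B0 and b'=b1 and bs=bs1, OF g0b eta(1)] unfolding P_def bs' by blast
    define H where "H = max H0 1"
    have H1: "H \<ge> 1" "H \<ge> H0" unfolding H_def by auto
    have "\<forall>p::nat\<times>nat. \<exists>T0. \<forall>T\<ge>T0. \<forall>c::nat\<Rightarrow>int. \<exists>N0. \<forall>N\<ge>N0.
        Qsum N T (\<lambda>n t. \<Prod>i<Suc k. Gf (fst p) (snd p) i (a i * n + d i * t + c i)) \<le> C' * psi bs' (Gf (fst p) (snd p) 0) + \<eta>"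
    proof
      fix p :: "nat \<times> nat"
      show "\<exists>T0. \<forall>T\<ge>T0. \<forall>c::nat\<Rightarrow>int. \<exists>N0. \<forall>N\<ge>N0.
        Qsum N T (\<lambda>n t. \<Prod>i<Suc k. Gf (fst p) (snd p) i (a i * n + d i * t + c i)) \<le> C' * psi bs' (Gf (fst p) (snd p) 0) + \<eta>"
        using IHb[rule_format, OF Gfb[of "fst p" "snd p", rule_format] eta(1)] .
    qed
    from choice[OF this] obtain T0f where T0f: "\<forall>p. \<forall>T\<ge>T0f p. \<forall>c::nat\<Rightarrow>int. \<exists>N0. \<forall>N\<ge>N0.
        Qsum N T (\<lambda>n t. \<Prod>i<Suc k. Gf (fst p) (snd p) i (a i * n + d i * t + c i)) \<le> C' * psi bs' (Gf (fst p) (snd p) 0) + \<eta>"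
      by blast
    define T where "T = 1 + (\<Sum>p\<in>{..<H}\<times>{..<H}. T0f p)"
    have T1: "T \<ge> 1" unfolding T_def by simp
    have TT: "T \<ge> T0f (h, h')" if "h < H" "h' < H" for h h'
    proof -
      have "T0f (h, h') \<le> (\<Sum>p\<in>{..<H}\<times>{..<H}. T0f p)" using that by (intro member_le_sum) auto
      thus ?thesis unfolding T_def by simp
    qed
    define Ka where "Ka = 2 * real_of_int \<bar>a (Suc k)\<bar> * real T"
    define Kb where "Kb = 2 * real_of_int \<bar>b (Suc k)\<bar> * real T"
    define M0 where "M0 = H + nat \<lceil>(4 * real H + Ka) / \<eta>\<rceil> + 1"
    show "\<exists>M0. \<forall>M\<ge>M0. \<forall>c::nat\<Rightarrow>int. \<exists>N0. \<forall>N\<ge>N0.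
       Qsum N M (\<lambda>n m. \<Prod>i<Suc (Suc k). g i (a i * n + b i * m + c i)) \<le> sqrt C' * psi (B0 # bs') (g 0) + \<epsilon>"
    proof (rule exI[of _ M0], intro allI impI)
      fix M :: nat and c :: "nat \<Rightarrow> int" assume M: "M \<ge> M0"
      have "\<forall>q::(nat\<times>nat)\<times>nat. \<exists>N0. fst (fst q) < H \<and> snd (fst q) < H \<longrightarrow> (\<forall>N\<ge>N0.
         Qsum N T (\<lambda>n t. \<Prod>i<Suc k. Gf (fst (fst q)) (snd (fst q)) i (a i * n + d i * t + (b i * int (snd q) + c i)))
           \<le> C' * psi bs' (Gf (fst (fst q)) (snd (fst q)) 0) + \<eta>)"
      proof
        fix q :: "(nat\<times>nat)\<times>nat"
        show "\<exists>N0. fst (fst q) < H \<and> snd (fst q) < H \<longrightarrow> (\<forall>N\<ge>N0.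
         Qsum N T (\<lambda>n t. \<Prod>i<Suc k. Gf (fst (fst q)) (snd (fst q)) i (a i * n + d i * t + (b i * int (snd q) + c i)))
           \<le> C' * psi bs' (Gf (fst (fst q)) (snd (fst q)) 0) + \<eta>)"
        proof (cases "fst (fst q) < H \<and> snd (fst q) < H")
          case True
          hence "T \<ge> T0f (fst q)" using TT[of "fst (fst q)" "snd (fst q)"] by simp
          hence "\<exists>N0. \<forall>N\<ge>N0. Qsum N T (\<lambda>n t. \<Prod>i<Suc k. Gf (fst (fst q)) (snd (fst q)) i (a i * n + d i * t + (b i * int (snd q) + c i)))
           \<le> C' * psi bs' (Gf (fst (fst q)) (snd (fst q)) 0) + \<eta>"
            using T0f[rule_format, of "fst q" T "\<lambda>i. b i * int (snd q) + c i"] by blast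
          thus ?thesis by blast
        qed blast
      qed
      from choice[OF this] obtain N0f where N0f: "\<forall>q. fst (fst q) < H \<and> snd (fst q) < H \<longrightarrow> (\<forall>N\<ge>N0f q.
         Qsum N T (\<lambda>n t. \<Prod>i<Suc k. Gf (fst (fst q)) (snd (fst q)) i (a i * n + d i * t + (b i * int (snd q) + c i)))
           \<le> C' * psi bs' (Gf (fst (fst q)) (snd (fst q)) 0) + \<eta>)" by blast
      define N0 where "N0 = 1 + (\<Sum>q\<in>({..<H}\<times>{..<H})\<times>{1..M}. N0f q) + nat \<lceil>Kb / \<eta>\<rceil>"
      show "\<exists>N0. \<forall>N\<ge>N0. Qsum N M (\<lambda>n m. \<Prod>i<Suc (Suc k). g i (a i * n + b i * m + c i)) \<le> sqrt C' * psi (B0 # bs') (g 0) + \<epsilon>"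
      proof (rule exI[of _ N0], intro allI impI)
        fix N assume N: "N \<ge> N0"
        have N1: "N \<ge> 1" using N unfolding N0_def by simp
        have HM: "H \<le> M" using M unfolding M0_def by simp
        define \<psi> where "\<psi> h h' = psi bs' (Gf h h' 0)" for h h'
        have psi0: "\<psi> h h' \<ge> 0" for h h'
        proof -
          have "0 \<le> psi bs' (Gf h h' 0) \<and> psi bs' (Gf h h' 0) \<le> 1" by (rule psi_bounds) (use Gfb in blast)
          thus ?thesis unfolding \<psi>_def by simp
        qed
        have Qb: "Qsum N T (\<lambda>n t. \<Prod>i<Suc k. g i (a i * n + (b i * a (Suc k) - a i * b (Suc k)) * t + (b i * int m + c i) + b i * int h)
                              * g i (a i * n + (b i * a (Suc k) - a i * b (Suc k)) * t + (b i * int m + c i) + b i * int h'))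
          \<le> C' * \<psi> h h' + \<eta>" if hm: "h < H" "h' < H" "m \<in> {1..M}" for h h' m
        proof -
          have "N0f ((h, h'), m) \<le> (\<Sum>q\<in>({..<H}\<times>{..<H})\<times>{1..M}. N0f q)" using hm by (intro member_le_sum) auto
          hence "N \<ge> N0f ((h, h'), m)" using N unfolding N0_def by simp
          thus ?thesis using N0f[rule_format, of "((h, h'), m)" N] hm unfolding Gf_def \<psi>_def d_def by simp
        qed
        have core: "Qsum N M (\<lambda>n m. \<Prod>i<Suc (Suc k). g i (a i * n + b i * m + c i))
          \<le> (\<Sum>h<H. \<Sum>h'<H. sqrt (C' * \<psi> h h' + \<eta>)) / (real H)^2
             + (Kb / real N + Ka / real M) + 4 * real H / real M"
          unfolding Ka_def Kb_def
          by (rule step_core[OF gb H1(1) HM T1 N1 C'0 less_imp_le[OF eta(1)] psi0 Qb]) auto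
        have Hp: "real H > 0" using H1 by simp
        have A1: "(\<Sum>h<H. \<Sum>h'<H. sqrt (C' * \<psi> h h' + \<eta>)) / (real H)^2 \<le> s * (P + \<eta>) + sqrt \<eta>"
        proof -
          have "(\<Sum>h<H. \<Sum>h'<H. sqrt (C' * \<psi> h h' + \<eta>)) \<le> (\<Sum>h<H. \<Sum>h'<H. s * sqrt (\<psi> h h') + sqrt \<eta>)"
            unfolding s_def using C'0 psi0 eta by (intro sum_mono sqrt_lin_bound) auto
          also have "\<dots> = s * (\<Sum>h<H. \<Sum>h'<H. sqrt (\<psi> h h')) + (real H)^2 * sqrt \<eta>"
            by (simp add: sum.distrib sum_distrib_left power2_eq_square)
          finally have "(\<Sum>h<H. \<Sum>h'<H. sqrt (C' * \<psi> h h' + \<eta>)) / (real H)^2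
             \<le> (s * (\<Sum>h<H. \<Sum>h'<H. sqrt (\<psi> h h')) + (real H)^2 * sqrt \<eta>) / (real H)^2"
            using Hp by (simp add: divide_right_mono)
          also have "\<dots> = s * ((\<Sum>h<H. \<Sum>h'<H. sqrt (\<psi> h h')) / (real H)^2) + sqrt \<eta>"
            using Hp by (simp add: field_simps)
          also have "(\<Sum>h<H. \<Sum>h'<H. sqrt (\<psi> h h')) / (real H)^2 \<le> P + \<eta>"
          proof -
            have "\<psi> h h' = psi bs' (\<lambda>y. g 0 (y + int B0 * int h) * g 0 (y + int B0 * int h'))" for h h'
              unfolding \<psi>_def Gf_def B0 by simp
            thus ?thesis using H0 H1 by simp
          qed
          hence "s * ((\<Sum>h<H. \<Sum>h'<H. sqrt (\<psi> h h')) / (real H)^2) \<le> s * (P + \<eta>)" using s0 by (rule mult_left_mono)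
          finally show ?thesis by simp
        qed
        have A2: "Kb / real N \<le> \<eta>"
        proof -
          have "Kb / \<eta> \<le> real N"
          proof -
            have "Kb / \<eta> \<le> real (nat \<lceil>Kb / \<eta>\<rceil>)" by linarith
            also have "nat \<lceil>Kb / \<eta>\<rceil> \<le> N" using N unfolding N0_def by linarith
            hence "real (nat \<lceil>Kb / \<eta>\<rceil>) \<le> real N" by (simp only: of_nat_le_iff)
            finally show ?thesis .
          qed
          thus ?thesis using eta N1 by (simp add: field_simps)
        qed
        have A3: "Ka / real M + 4 * real H / real M \<le> \<eta>"
        proof -
          have "(4 * real H + Ka) / \<eta> \<le> real M"
          proof -
            have "(4 * real H + Ka) / \<eta> \<le> real (nat \<lceil>(4 * real H + Ka) / \<eta>\<rceil>)" by linarith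
            also have "nat \<lceil>(4 * real H + Ka) / \<eta>\<rceil> \<le> M" using M unfolding M0_def by linarith
            hence "real (nat \<lceil>(4 * real H + Ka) / \<eta>\<rceil>) \<le> real M" by (simp only: of_nat_le_iff)
            finally show ?thesis .
          qed
          moreover have "real M > 0" using HM H1 by simp
          ultimately show ?thesis using eta by (simp add: field_simps)
        qed
        have fin: "s * (P + \<eta>) + sqrt \<eta> + \<eta> + \<eta> \<le> s * P + \<epsilon>"
        proof -
          have "s * \<eta> \<le> s * sqrt \<eta>" using eta4 s0 by (rule mult_left_mono)
          hence "s * (P + \<eta>) + sqrt \<eta> + \<eta> + \<eta> \<le> s * P + (s + 3) * sqrt \<eta>" using eta4 by (simp add: algebra_simps)
          also have "(s + 3) * sqrt \<eta> \<le> (s + 3) * (\<epsilon> / (s + 6))" using s0 eta3 by (intro mult_left_mono) auto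
          also have "\<dots> \<le> \<epsilon>" using s0 e by (simp add: field_simps)
          finally show ?thesis by simp
        qed
        show "Qsum N M (\<lambda>n m. \<Prod>i<Suc (Suc k). g i (a i * n + b i * m + c i)) \<le> sqrt C' * psi (B0 # bs') (g 0) + \<epsilon>"
          using core A1 A2 A3 fin unfolding s_def P_def by linarith
      qed
    qed
  qed
qed

lemma VF_neg: "VF k a b \<Longrightarrow> VF k a (\<lambda>i. - b i)"
  unfolding VF_def by (auto simp: algebra_simps)

lemma QP_main: "VF (Suc k) a b \<Longrightarrow> QP (Suc k) a b"
proof (induction k arbitrary: a b)
  case 0
  have a0: "a 0 > 0" "b 0 \<noteq> 0" using 0 unfolding VF_def by auto
  show ?case
  proof (cases "b 0 > 0")
    case True
    thus ?thesis using QP_base_pos[where a=a and b=b, OF a0(1) True] by simp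
  next
    case False
    hence "(\<lambda>i. - b i) 0 > 0" using a0 by simp
    hence "QP 1 a (\<lambda>i. - b i)" using QP_base_pos[where a=a and b="\<lambda>i. - b i", OF a0(1)] by blast
    thus ?thesis by (simp add: QP_flip)
  qed
next
  case (Suc k)
  have b0: "b 0 \<noteq> 0" using Suc.prems unfolding VF_def by auto
  have pos: "QP (Suc (Suc k)) a b'" if V: "VF (Suc (Suc k)) a b'" and b'0: "b' 0 > 0" for b'
  proof (rule QP_step_pos[OF V b'0])
    show "QP (Suc k) a (\<lambda>i. b' i * a (Suc k) - a i * b' (Suc k))"
      by (rule Suc.IH, rule VF_reduce[OF V])
  qed
  show ?case
  proof (cases "b 0 > 0")
    case True thus ?thesis using pos[OF Suc.prems] by simp
  next
    case False
    hence "(\<lambda>i. - b i) 0 > 0" using b0 by simp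
    hence "QP (Suc (Suc k)) a (\<lambda>i. - b i)" using pos[OF VF_neg[OF Suc.prems]] by blast
    thus ?thesis by (rule QP_flip[where b=b, simplified])
  qed
qed

lemma funpow_shiftT: "(shiftT ^^ n) \<omega> = (\<lambda>j. \<omega> (j + n))"
  by (induction n arbitrary: \<omega>) (auto simp: shiftT_def funpow_Suc_right)

definition cyl :: "((nat \<Rightarrow> bool) \<Rightarrow> real) \<Rightarrow> nat \<Rightarrow> bool" where
  "cyl F L \<longleftrightarrow> (\<forall>\<omega> \<omega>'. (\<forall>i<L. \<omega> i = \<omega>' i) \<longrightarrow> F \<omega> = F \<omega>')"

lemma open_cylset: "open {\<omega>::nat\<Rightarrow>bool. \<forall>i<L. \<omega> i = v i}"
proof -
  have "{\<omega>::nat\<Rightarrow>bool. \<forall>i<L. \<omega> i = v i} = (\<Inter>i\<in>{..<L}. (\<lambda>\<omega>. \<omega> i) -` {v i})" by auto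
  also have "open \<dots>"
  proof (rule open_INT)
    show "\<forall>i\<in>{..<L}. open ((\<lambda>\<omega>::nat\<Rightarrow>bool. \<omega> i) -` {v i})"
    proof
      fix i
      show "open ((\<lambda>\<omega>::nat\<Rightarrow>bool. \<omega> i) -` {v i})"
        by (rule open_vimage) (simp_all add: discrete_topology_class.open_discrete)
    qed
  qed simp
  finally show ?thesis .
qed

lemma cyl_continuous:
  assumes "cyl F L"
  shows "continuous_on UNIV F"
proof -
  have "(F \<longlongrightarrow> F \<omega>) (at \<omega> within UNIV)" for \<omega>
  proof -
    have "eventually (\<lambda>\<omega>'. \<omega>' \<in> {\<omega>'. \<forall>i<L. \<omega>' i = \<omega> i}) (nhds \<omega>)"
      by (rule eventually_nhds_in_open[OF open_cylset]) simp
    hence "eventually (\<lambda>\<omega>'. F \<omega>' = F \<omega>) (nhds \<omega>)"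
      by (rule eventually_mono) (use assms in \<open>auto simp: cyl_def\<close>)
    hence "eventually (\<lambda>\<omega>'. F \<omega>' = F \<omega>) (at \<omega> within UNIV)"
      by (simp add: eventually_at_filter eventually_mono)
    thus ?thesis by (rule tendsto_eventually)
  qed
  thus ?thesis unfolding continuous_on_def by simp
qed

lemma cyl_shift:
  assumes "cyl F L"
  shows "cyl (\<lambda>\<omega>. F ((shiftT ^^ p) \<omega>)) (L + p)"
  using assms unfolding cyl_def funpow_shiftT by auto

lemma cyl_mult:
  assumes "cyl F L" "cyl G L'"
  shows "cyl (\<lambda>\<omega>. F \<omega> * G \<omega>) (max L L')"
  unfolding cyl_def
proof (intro allI impI)
  fix \<omega> \<omega>' :: "nat \<Rightarrow> bool" assume H: "\<forall>i<max L L'. \<omega> i = \<omega>' i"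
  have "F \<omega> = F \<omega>'" using assms(1) H unfolding cyl_def by auto
  moreover have "G \<omega> = G \<omega>'" using assms(2) H unfolding cyl_def by auto
  ultimately show "F \<omega> * G \<omega> = F \<omega>' * G \<omega>'" by simp
qed

lemma cyl_mono: "cyl F L \<Longrightarrow> L \<le> L' \<Longrightarrow> cyl F L'"
  unfolding cyl_def by auto

locale wmsys =
  fixes S :: "nat set" and \<mu> :: "(nat \<Rightarrow> bool) measure"
  assumes inv: "invariant_prob (orbit_closure (ind_point S)) \<mu>"
    and gen: "generic_for (ind_point S) (orbit_closure (ind_point S)) \<mu>"
    and wm: "weakly_mixing \<mu>"
begin

abbreviation "X \<equiv> orbit_closure (ind_point S)"

lemma ps: "prob_space \<mu>" using inv unfolding invariant_prob_def by auto
lemma spc: "space \<mu> = X" using inv unfolding invariant_prob_def by auto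
lemma sts: "sets \<mu> = sets (restrict_space borel X)" using inv unfolding invariant_prob_def by auto
lemma Tm: "shiftT \<in> \<mu> \<rightarrow>\<^sub>M \<mu>" using inv unfolding invariant_prob_def by auto
lemma Tpres: "A \<in> sets \<mu> \<Longrightarrow> measure \<mu> (shiftT -` A \<inter> space \<mu>) = measure \<mu> A"
  using inv unfolding invariant_prob_def by auto

lemma Tp_meas: "(shiftT ^^ p) \<in> \<mu> \<rightarrow>\<^sub>M \<mu>"
proof (induction p)
  case 0 then show ?case by simp
next
  case (Suc p)
  have "shiftT \<circ> (shiftT ^^ p) \<in> \<mu> \<rightarrow>\<^sub>M \<mu>" by (rule measurable_comp[OF Suc Tm])
  thus ?case by (simp only: funpow.simps(2))
qed

lemma Tp_space: "\<omega> \<in> space \<mu> \<Longrightarrow> (shiftT ^^ p) \<omega> \<in> space \<mu>"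
  by (rule measurable_space[OF Tp_meas])

lemma Tp_pres: "A \<in> sets \<mu> \<Longrightarrow> measure \<mu> ((shiftT ^^ p) -` A \<inter> space \<mu>) = measure \<mu> A"
proof (induction p arbitrary: A)
  case 0 then show ?case by (simp add: Int_absorb2 sets.sets_into_space)
next
  case (Suc p)
  have A': "shiftT -` A \<inter> space \<mu> \<in> sets \<mu>" using measurable_sets[OF Tm Suc.prems] .
  have "(shiftT ^^ Suc p) -` A \<inter> space \<mu> = (shiftT ^^ p) -` (shiftT -` A \<inter> space \<mu>) \<inter> space \<mu>"
  proof (intro equalityI subsetI)
    fix x assume "x \<in> (shiftT ^^ Suc p) -` A \<inter> space \<mu>"
    thus "x \<in> (shiftT ^^ p) -` (shiftT -` A \<inter> space \<mu>) \<inter> space \<mu>" using Tp_space[of x p] by simp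
  next
    fix x assume "x \<in> (shiftT ^^ p) -` (shiftT -` A \<inter> space \<mu>) \<inter> space \<mu>"
    thus "x \<in> (shiftT ^^ Suc p) -` A \<inter> space \<mu>" by simp
  qed
  hence "measure \<mu> ((shiftT ^^ Suc p) -` A \<inter> space \<mu>) = measure \<mu> (shiftT -` A \<inter> space \<mu>)"
    using Suc.IH[OF A'] by simp
  also have "\<dots> = measure \<mu> A" by (rule Tpres[OF Suc.prems])
  finally show ?case .
qed

lemma distr_Tp: "distr \<mu> \<mu> (shiftT ^^ p) = \<mu>"
proof (rule measure_eqI)
  show "sets (distr \<mu> \<mu> (shiftT ^^ p)) = sets \<mu>" by (rule sets_distr)
  fix A assume "A \<in> sets (distr \<mu> \<mu> (shiftT ^^ p))"
  hence A: "A \<in> sets \<mu>" by (simp only: sets_distr)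
  have "emeasure (distr \<mu> \<mu> (shiftT ^^ p)) A = emeasure \<mu> ((shiftT ^^ p) -` A \<inter> space \<mu>)"
    by (rule emeasure_distr[OF Tp_meas A])
  also have "\<dots> = ennreal (measure \<mu> ((shiftT ^^ p) -` A \<inter> space \<mu>))"
    by (rule finite_measure.emeasure_eq_measure[OF prob_space.axioms(1)[OF ps]])
  also have "\<dots> = ennreal (measure \<mu> A)" using Tp_pres[OF A] by simp
  also have "\<dots> = emeasure \<mu> A" by (rule finite_measure.emeasure_eq_measure[OF prob_space.axioms(1)[OF ps], symmetric])
  finally show "emeasure (distr \<mu> \<mu> (shiftT ^^ p)) A = emeasure \<mu> A" .
qed

lemma int_Tp:
  fixes F :: "(nat \<Rightarrow> bool) \<Rightarrow> real"
  assumes "F \<in> borel_measurable \<mu>"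
  shows "(\<integral>\<omega>. F ((shiftT ^^ p) \<omega>) \<partial>\<mu>) = (\<integral>\<omega>. F \<omega> \<partial>\<mu>)"
proof -
  have "(\<integral>\<omega>. F \<omega> \<partial>(distr \<mu> \<mu> (shiftT ^^ p))) = (\<integral>\<omega>. F ((shiftT ^^ p) \<omega>) \<partial>\<mu>)"
    by (rule integral_distr[OF Tp_meas assms])
  thus ?thesis using distr_Tp by simp
qed

lemma cont_meas:
  fixes F :: "(nat \<Rightarrow> bool) \<Rightarrow> real"
  assumes "continuous_on UNIV F"
  shows "F \<in> borel_measurable \<mu>"
proof -
  have "F \<in> borel_measurable borel" by (rule borel_measurable_continuous_onI[OF assms])
  hence "F \<in> borel_measurable (restrict_space borel X)" by (rule measurable_restrict_space1)
  moreover have eq: "borel_measurable \<mu> = borel_measurable (restrict_space borel X)" by (rule measurable_cong_sets[OF sts refl])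
  ultimately show ?thesis by (simp only: eq)
qed

end

definition Vset :: "nat \<Rightarrow> (nat \<Rightarrow> bool) set" where "Vset L = (\<lambda>s i. i \<in> s) ` Pow {..<L}"
definition Cyl :: "nat \<Rightarrow> (nat \<Rightarrow> bool) \<Rightarrow> (nat \<Rightarrow> bool) set" where "Cyl L v = {\<omega>. \<forall>i<L. \<omega> i = v i}"

lemma finite_Vset: "finite (Vset L)" unfolding Vset_def by simp

lemma cyl_decomp:
  assumes "cyl F L"
  shows "F \<omega> = (\<Sum>v\<in>Vset L. F v * indicator (Cyl L v) \<omega>)"
proof -
  define v0 where "v0 = (\<lambda>i. i \<in> {i. i < L \<and> \<omega> i})"
  have v0V: "v0 \<in> Vset L" unfolding Vset_def v0_def by (rule image_eqI[of _ _ "{i. i < L \<and> \<omega> i}"]) auto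
  have key: "F v * indicator (Cyl L v) \<omega> = (if v = v0 then F v else 0)" if "v \<in> Vset L" for v
  proof -
    from that obtain s where s: "s \<subseteq> {..<L}" "v = (\<lambda>i. i \<in> s)" unfolding Vset_def by auto
    have "\<omega> \<in> Cyl L v \<longleftrightarrow> v = v0"
    proof
      assume "\<omega> \<in> Cyl L v"
      hence Hs: "\<forall>i<L. \<omega> i = (i \<in> s)" unfolding Cyl_def s(2) by auto
      have "s = {i. i < L \<and> \<omega> i}"
      proof (rule set_eqI)
        fix x show "x \<in> s \<longleftrightarrow> x \<in> {i. i < L \<and> \<omega> i}"
        proof (cases "x < L")
          case True then have "\<omega> x = (x \<in> s)" using Hs by blast
          thus ?thesis using True by simp
        next
          case False hence "x \<notin> s" using s(1) by auto
          thus ?thesis using False by simp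
        qed
      qed
      thus "v = v0" unfolding v0_def s(2) by simp
    next
      assume "v = v0" thus "\<omega> \<in> Cyl L v" unfolding Cyl_def v0_def by auto
    qed
    thus ?thesis by (auto simp: indicator_def)
  qed
  have "(\<Sum>v\<in>Vset L. F v * indicator (Cyl L v) \<omega>) = (\<Sum>v\<in>Vset L. if v = v0 then F v else 0)"
    by (rule sum.cong[OF refl]) (rule key)
  also have "\<dots> = F v0" using v0V finite_Vset by (simp add: sum.delta')
  also have "F v0 = F \<omega>" using assms unfolding cyl_def v0_def by auto
  finally show ?thesis by simp
qed

lemma cyl_bounded:
  assumes "cyl F L"
  shows "\<bar>F \<omega>\<bar> \<le> (\<Sum>v\<in>Vset L. \<bar>F v\<bar>)"
proof -
  have e: "F \<omega> = (\<Sum>v\<in>Vset L. F v * indicator (Cyl L v) \<omega>)" by (rule cyl_decomp[OF assms])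
  have "\<bar>F \<omega>\<bar> = \<bar>\<Sum>v\<in>Vset L. F v * indicator (Cyl L v) \<omega>\<bar>" by (subst e) (rule refl)
  also have "\<dots> \<le> (\<Sum>v\<in>Vset L. \<bar>F v * indicator (Cyl L v) \<omega>\<bar>)" by (rule sum_abs)
  also have "\<dots> \<le> (\<Sum>v\<in>Vset L. \<bar>F v\<bar>)" by (rule sum_mono) (simp add: indicator_def abs_mult)
  finally show ?thesis .
qed

lemma cyl_indicator: "cyl (indicator (Cyl L v)) L"
  unfolding cyl_def
proof (intro allI impI)
  fix \<omega> \<omega>' :: "nat \<Rightarrow> bool" assume H: "\<forall>i<L. \<omega> i = \<omega>' i"
  have "(\<omega> \<in> Cyl L v) = (\<omega>' \<in> Cyl L v)" unfolding Cyl_def using H by simp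
  thus "indicator (Cyl L v) \<omega> = (indicator (Cyl L v) \<omega>' :: real)" by (simp add: indicator_def)
qed

lemma open_Cyl: "open (Cyl L v)" unfolding Cyl_def by (rule open_cylset)

context wmsys begin

lemma cyl_integrable:
  assumes "cyl F L"
  shows "integrable \<mu> F"
proof -
  have m: "F \<in> borel_measurable \<mu>" by (rule cont_meas[OF cyl_continuous[OF assms]])
  show ?thesis
    by (rule finite_measure.integrable_const_bound[OF prob_space.axioms(1)[OF ps], where B="\<Sum>v\<in>Vset L. \<bar>F v\<bar>"])
       (use cyl_bounded[OF assms] m in auto)
qed

lemma Cyl_sets: "Cyl L v \<inter> X \<in> sets \<mu>"
proof -
  have "Cyl L v \<in> sets borel" using open_Cyl by (rule borel_open)
  hence "X \<inter> Cyl L v \<in> sets (restrict_space borel X)" unfolding sets_restrict_space by blast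
  thus ?thesis using sts by (simp add: Int_commute)
qed

lemma int_cyl_prod:
  assumes F: "cyl F L" and G: "cyl G L"
  shows "(\<integral>\<omega>. F ((shiftT ^^ n) \<omega>) * G \<omega> \<partial>\<mu>) =
    (\<Sum>v\<in>Vset L. \<Sum>w\<in>Vset L. F v * G w * measure \<mu> ((shiftT ^^ n) -` (Cyl L v \<inter> X) \<inter> space \<mu> \<inter> (Cyl L w \<inter> X)))"
proof -
  define h where "h v w \<omega> = (indicator (Cyl L v) ((shiftT ^^ n) \<omega>) * indicator (Cyl L w) \<omega> :: real)" for v w \<omega>
  have hint: "integrable \<mu> (h v w)" for v w
  proof -
    have "cyl (h v w) (max (L + n) L)" unfolding h_def
      by (rule cyl_mult[OF cyl_shift[OF cyl_indicator] cyl_indicator])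
    thus ?thesis by (rule cyl_integrable)
  qed
  have pt: "F ((shiftT ^^ n) \<omega>) * G \<omega> = (\<Sum>v\<in>Vset L. \<Sum>w\<in>Vset L. F v * G w * h v w \<omega>)" for \<omega>
  proof -
    have e1: "F ((shiftT ^^ n) \<omega>) = (\<Sum>v\<in>Vset L. F v * indicator (Cyl L v) ((shiftT ^^ n) \<omega>))" by (rule cyl_decomp[OF F])
    have e2: "G \<omega> = (\<Sum>w\<in>Vset L. G w * indicator (Cyl L w) \<omega>)" by (rule cyl_decomp[OF G])
    have "F ((shiftT ^^ n) \<omega>) * G \<omega> = (\<Sum>v\<in>Vset L. F v * indicator (Cyl L v) ((shiftT ^^ n) \<omega>)) * (\<Sum>w\<in>Vset L. G w * indicator (Cyl L w) \<omega>)"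
      by (subst e1, subst e2, rule refl)
    also have "\<dots> = (\<Sum>v\<in>Vset L. \<Sum>w\<in>Vset L. F v * G w * h v w \<omega>)"
      unfolding sum_product h_def by (intro sum.cong refl) (simp only: mult_ac)
    finally show ?thesis .
  qed
  have "(\<integral>\<omega>. F ((shiftT ^^ n) \<omega>) * G \<omega> \<partial>\<mu>) = (\<integral>\<omega>. (\<Sum>v\<in>Vset L. \<Sum>w\<in>Vset L. F v * G w * h v w \<omega>) \<partial>\<mu>)"
    by (simp only: pt)
  also have "\<dots> = (\<Sum>v\<in>Vset L. \<integral>\<omega>. (\<Sum>w\<in>Vset L. F v * G w * h v w \<omega>) \<partial>\<mu>)"
    by (rule Bochner_Integration.integral_sum) (use hint in auto)
  also have "\<dots> = (\<Sum>v\<in>Vset L. \<Sum>w\<in>Vset L. \<integral>\<omega>. F v * G w * h v w \<omega> \<partial>\<mu>)"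
    by (rule sum.cong[OF refl], rule Bochner_Integration.integral_sum) (use hint in auto)
  also have "\<dots> = (\<Sum>v\<in>Vset L. \<Sum>w\<in>Vset L. F v * G w * (\<integral>\<omega>. h v w \<omega> \<partial>\<mu>))"
    by simp
  also have "\<dots> = (\<Sum>v\<in>Vset L. \<Sum>w\<in>Vset L. F v * G w * measure \<mu> ((shiftT ^^ n) -` (Cyl L v \<inter> X) \<inter> space \<mu> \<inter> (Cyl L w \<inter> X)))"
  proof (intro sum.cong refl)
    fix v w
    have "h v w = indicator ((shiftT ^^ n) -` Cyl L v \<inter> Cyl L w)" unfolding h_def
      by (rule ext) (simp add: indicator_inter_arith indicator_vimage)
    hence "(\<integral>\<omega>. h v w \<omega> \<partial>\<mu>) = measure \<mu> ((shiftT ^^ n) -` Cyl L v \<inter> Cyl L w \<inter> space \<mu>)" by simp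
    also have "(shiftT ^^ n) -` Cyl L v \<inter> Cyl L w \<inter> space \<mu> = (shiftT ^^ n) -` (Cyl L v \<inter> X) \<inter> space \<mu> \<inter> (Cyl L w \<inter> X)"
    proof (intro equalityI subsetI)
      fix x assume x: "x \<in> (shiftT ^^ n) -` Cyl L v \<inter> Cyl L w \<inter> space \<mu>"
      hence "(shiftT ^^ n) x \<in> X" using Tp_space[of x n] spc by simp
      thus "x \<in> (shiftT ^^ n) -` (Cyl L v \<inter> X) \<inter> space \<mu> \<inter> (Cyl L w \<inter> X)" using x spc by simp
    qed auto
    finally show "F v * G w * (\<integral>\<omega>. h v w \<omega> \<partial>\<mu>) = F v * G w * measure \<mu> ((shiftT ^^ n) -` (Cyl L v \<inter> X) \<inter> space \<mu> \<inter> (Cyl L w \<inter> X))"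
      by simp
  qed
  finally show ?thesis .
qed

lemma int_cyl:
  assumes F: "cyl F L"
  shows "(\<integral>\<omega>. F \<omega> \<partial>\<mu>) = (\<Sum>v\<in>Vset L. F v * measure \<mu> (Cyl L v \<inter> X))"
proof -
  have ee: "F = (\<lambda>\<omega>. \<Sum>v\<in>Vset L. F v * indicator (Cyl L v) \<omega>)" by (rule ext, rule cyl_decomp[OF F])
  have "(\<integral>\<omega>. F \<omega> \<partial>\<mu>) = (\<integral>\<omega>. (\<Sum>v\<in>Vset L. F v * indicator (Cyl L v) \<omega>) \<partial>\<mu>)"
    by (subst ee) (rule refl)
  also have "\<dots> = (\<Sum>v\<in>Vset L. \<integral>\<omega>. F v * indicator (Cyl L v) \<omega> \<partial>\<mu>)"
    by (rule Bochner_Integration.integral_sum) (use cyl_integrable[OF cyl_indicator] in auto)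
  also have "\<dots> = (\<Sum>v\<in>Vset L. F v * measure \<mu> (Cyl L v \<inter> X))" using spc by simp
  finally show ?thesis .
qed

end

definition dst :: "nat \<Rightarrow> nat \<Rightarrow> nat" where "dst x y = (if x \<le> y then y - x else x - y)"

context wmsys begin

lemma wm_cyl:
  assumes F: "cyl F L" and G: "cyl G L"
  shows "(\<lambda>N. (\<Sum>n<N. \<bar>(\<integral>\<omega>. F ((shiftT ^^ n) \<omega>) * G \<omega> \<partial>\<mu>) - (\<integral>\<omega>. F \<omega> \<partial>\<mu>) * (\<integral>\<omega>. G \<omega> \<partial>\<mu>)\<bar>) / real N) \<longlonglongrightarrow> 0"
proof -
  define m where "m n v w = measure \<mu> ((shiftT ^^ n) -` (Cyl L v \<inter> X) \<inter> space \<mu> \<inter> (Cyl L w \<inter> X))" for n v w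
  define mv where "mv v = measure \<mu> (Cyl L v \<inter> X)" for v
  have diff: "(\<integral>\<omega>. F ((shiftT ^^ n) \<omega>) * G \<omega> \<partial>\<mu>) - (\<integral>\<omega>. F \<omega> \<partial>\<mu>) * (\<integral>\<omega>. G \<omega> \<partial>\<mu>)
     = (\<Sum>v\<in>Vset L. \<Sum>w\<in>Vset L. F v * G w * (m n v w - mv v * mv w))" for n
  proof -
    have "(\<integral>\<omega>. F \<omega> \<partial>\<mu>) * (\<integral>\<omega>. G \<omega> \<partial>\<mu>) = (\<Sum>v\<in>Vset L. \<Sum>w\<in>Vset L. F v * G w * (mv v * mv w))"
      unfolding int_cyl[OF F] int_cyl[OF G] mv_def sum_product by (simp add: mult_ac)
    thus ?thesis unfolding int_cyl_prod[OF F G] m_def[symmetric]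
      by (simp add: sum_subtractf right_diff_distrib)
  qed
  define U where "U N = (\<Sum>v\<in>Vset L. \<Sum>w\<in>Vset L. \<bar>F v\<bar> * \<bar>G w\<bar> * ((\<Sum>n<N. \<bar>m n v w - mv v * mv w\<bar>) / real N))" for N
  have le: "(\<Sum>n<N. \<bar>(\<integral>\<omega>. F ((shiftT ^^ n) \<omega>) * G \<omega> \<partial>\<mu>) - (\<integral>\<omega>. F \<omega> \<partial>\<mu>) * (\<integral>\<omega>. G \<omega> \<partial>\<mu>)\<bar>) / real N \<le> U N" for N
  proof -
    have "(\<Sum>n<N. \<bar>(\<integral>\<omega>. F ((shiftT ^^ n) \<omega>) * G \<omega> \<partial>\<mu>) - (\<integral>\<omega>. F \<omega> \<partial>\<mu>) * (\<integral>\<omega>. G \<omega> \<partial>\<mu>)\<bar>)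
       \<le> (\<Sum>n<N. \<Sum>v\<in>Vset L. \<Sum>w\<in>Vset L. \<bar>F v\<bar> * \<bar>G w\<bar> * \<bar>m n v w - mv v * mv w\<bar>)"
    proof (rule sum_mono)
      fix n
      have "\<bar>\<Sum>v\<in>Vset L. \<Sum>w\<in>Vset L. F v * G w * (m n v w - mv v * mv w)\<bar> \<le> (\<Sum>v\<in>Vset L. \<bar>\<Sum>w\<in>Vset L. F v * G w * (m n v w - mv v * mv w)\<bar>)"
        by (rule sum_abs)
      also have "\<dots> \<le> (\<Sum>v\<in>Vset L. \<Sum>w\<in>Vset L. \<bar>F v * G w * (m n v w - mv v * mv w)\<bar>)"
        by (intro sum_mono sum_abs)
      finally show "\<bar>(\<integral>\<omega>. F ((shiftT ^^ n) \<omega>) * G \<omega> \<partial>\<mu>) - (\<integral>\<omega>. F \<omega> \<partial>\<mu>) * (\<integral>\<omega>. G \<omega> \<partial>\<mu>)\<bar>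
          \<le> (\<Sum>v\<in>Vset L. \<Sum>w\<in>Vset L. \<bar>F v\<bar> * \<bar>G w\<bar> * \<bar>m n v w - mv v * mv w\<bar>)"
        unfolding diff by (simp add: abs_mult)
    qed
    also have "\<dots> = (\<Sum>v\<in>Vset L. \<Sum>w\<in>Vset L. \<bar>F v\<bar> * \<bar>G w\<bar> * (\<Sum>n<N. \<bar>m n v w - mv v * mv w\<bar>))"
    proof -
      have "(\<Sum>n<N. \<Sum>v\<in>Vset L. \<Sum>w\<in>Vset L. \<bar>F v\<bar> * \<bar>G w\<bar> * \<bar>m n v w - mv v * mv w\<bar>)
          = (\<Sum>v\<in>Vset L. \<Sum>n<N. \<Sum>w\<in>Vset L. \<bar>F v\<bar> * \<bar>G w\<bar> * \<bar>m n v w - mv v * mv w\<bar>)" by (rule sum.swap)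
      also have "\<dots> = (\<Sum>v\<in>Vset L. \<Sum>w\<in>Vset L. \<Sum>n<N. \<bar>F v\<bar> * \<bar>G w\<bar> * \<bar>m n v w - mv v * mv w\<bar>)"
        by (rule sum.cong[OF refl], rule sum.swap)
      finally show ?thesis by (simp add: sum_distrib_left)
    qed
    finally show ?thesis unfolding U_def
      by (simp add: divide_right_mono sum_divide_distrib[symmetric] times_divide_eq_right)
  qed
  have U0: "U \<longlonglongrightarrow> 0"
    unfolding U_def
  proof (intro tendsto_null_sum tendsto_mult_right_zero)
    fix v w assume "v \<in> Vset L" "w \<in> Vset L"
    have "\<forall>A\<in>sets \<mu>. \<forall>B\<in>sets \<mu>.
        (\<lambda>N. (\<Sum>n<N. \<bar>measure \<mu> ((shiftT ^^ n) -` A \<inter> space \<mu> \<inter> B) - measure \<mu> A * measure \<mu> B\<bar>) / real N) \<longlonglongrightarrow> 0"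
      using wm unfolding weakly_mixing_def by blast
    thus "(\<lambda>N. (\<Sum>n<N. \<bar>m n v w - mv v * mv w\<bar>) / real N) \<longlonglongrightarrow> 0"
      unfolding m_def mv_def using Cyl_sets by blast
  qed
  have nn: "0 \<le> (\<Sum>n<N. \<bar>(\<integral>\<omega>. F ((shiftT ^^ n) \<omega>) * G \<omega> \<partial>\<mu>) - (\<integral>\<omega>. F \<omega> \<partial>\<mu>) * (\<integral>\<omega>. G \<omega> \<partial>\<mu>)\<bar>) / real N" for N
    by (intro divide_nonneg_nonneg sum_nonneg) auto
  show ?thesis by (rule tendsto_sandwich[OF _ _ tendsto_const U0]) (use le nn in auto)
qed

lemma cyl_meas: "cyl F L \<Longrightarrow> F \<in> borel_measurable \<mu>"
  by (rule cont_meas[OF cyl_continuous])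

lemma int_two_shift:
  assumes F: "cyl F L"
  shows "(\<integral>\<omega>. F ((shiftT ^^ p) \<omega>) * F ((shiftT ^^ q) \<omega>) \<partial>\<mu>) = (\<integral>\<omega>. F ((shiftT ^^ dst p q) \<omega>) * F \<omega> \<partial>\<mu>)"
proof (cases "p \<le> q")
  case True
  define H where "H \<omega> = F ((shiftT ^^ (q - p)) \<omega>) * F \<omega>" for \<omega>
  have Hm: "H \<in> borel_measurable \<mu>" unfolding H_def by (rule cyl_meas[OF cyl_mult[OF cyl_shift[OF F] F]])
  have "(\<integral>\<omega>. F ((shiftT ^^ p) \<omega>) * F ((shiftT ^^ q) \<omega>) \<partial>\<mu>) = (\<integral>\<omega>. H ((shiftT ^^ p) \<omega>) \<partial>\<mu>)"
  proof -
    have "(shiftT ^^ q) \<omega> = (shiftT ^^ (q - p)) ((shiftT ^^ p) \<omega>)" for \<omega>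
      using True by (simp add: funpow_shiftT)
    thus ?thesis unfolding H_def by (simp add: mult.commute)
  qed
  also have "\<dots> = (\<integral>\<omega>. H \<omega> \<partial>\<mu>)" by (rule int_Tp[OF Hm])
  finally show ?thesis unfolding H_def dst_def using True by simp
next
  case False
  define H where "H \<omega> = F ((shiftT ^^ (p - q)) \<omega>) * F \<omega>" for \<omega>
  have Hm: "H \<in> borel_measurable \<mu>" unfolding H_def by (rule cyl_meas[OF cyl_mult[OF cyl_shift[OF F] F]])
  have "(\<integral>\<omega>. F ((shiftT ^^ p) \<omega>) * F ((shiftT ^^ q) \<omega>) \<partial>\<mu>) = (\<integral>\<omega>. H ((shiftT ^^ q) \<omega>) \<partial>\<mu>)"
  proof -
    have "(shiftT ^^ p) \<omega> = (shiftT ^^ (p - q)) ((shiftT ^^ q) \<omega>)" for \<omega>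
      using False by (simp add: funpow_shiftT)
    thus ?thesis unfolding H_def by simp
  qed
  also have "\<dots> = (\<integral>\<omega>. H \<omega> \<partial>\<mu>)" by (rule int_Tp[OF Hm])
  finally show ?thesis unfolding H_def dst_def using False by simp
qed

lemma generic_conv:
  fixes f :: "(nat \<Rightarrow> bool) \<Rightarrow> real"
  assumes "continuous_on UNIV f"
  shows "(\<lambda>N. (\<Sum>n<N. f ((shiftT ^^ n) (ind_point S))) / real N) \<longlonglongrightarrow> (\<integral>\<omega>. f \<omega> \<partial>\<mu>)"
proof -
  have "continuous_on X f" using assms by (rule continuous_on_subset) simp
  thus ?thesis using gen unfolding generic_for_def by blast
qed

end

lemma dist_sum_bound:
  fixes \<phi> :: "nat \<Rightarrow> real"
  assumes phi: "\<And>j. \<phi> j \<ge> 0" and fin: "finite I" and I: "\<And>x. x \<in> I \<Longrightarrow> lo \<le> x \<and> x < lo + M"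
  shows "(\<Sum>x\<in>I. \<Sum>y\<in>I. \<phi> (dst x y)) \<le> 2 * real (card I) * (\<Sum>j<M. \<phi> j)"
proof -
  have one: "(\<Sum>y\<in>I. \<phi> (dst x y)) \<le> 2 * (\<Sum>j<M. \<phi> j)" if x: "x \<in> I" for x
  proof -
    define I1 where "I1 = {y\<in>I. x \<le> y}"
    define I2 where "I2 = {y\<in>I. y < x}"
    have split: "(\<Sum>y\<in>I. \<phi> (dst x y)) = (\<Sum>y\<in>I1. \<phi> (dst x y)) + (\<Sum>y\<in>I2. \<phi> (dst x y))"
    proof -
      have "I = I1 \<union> I2" "I1 \<inter> I2 = {}" unfolding I1_def I2_def by auto
      moreover have "finite I1" "finite I2" using fin unfolding I1_def I2_def by auto
      ultimately show ?thesis by (metis sum.union_disjoint)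
    qed
    have s1: "(\<Sum>y\<in>I1. \<phi> (dst x y)) \<le> (\<Sum>j<M. \<phi> j)"
    proof -
      have inj: "inj_on (\<lambda>y. y - x) I1" unfolding I1_def by (auto intro: inj_onI)
      have "(\<Sum>y\<in>I1. \<phi> (dst x y)) = (\<Sum>y\<in>I1. \<phi> (y - x))" by (rule sum.cong) (auto simp: I1_def dst_def)
      also have "\<dots> = (\<Sum>j\<in>(\<lambda>y. y - x) ` I1. \<phi> j)" by (simp add: sum.reindex[OF inj])
      also have "\<dots> \<le> (\<Sum>j<M. \<phi> j)"
      proof (rule sum_mono2)
        show "(\<lambda>y. y - x) ` I1 \<subseteq> {..<M}"
        proof
          fix j assume "j \<in> (\<lambda>y. y - x) ` I1"
          then obtain y where "y \<in> I1" "j = y - x" by auto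
          thus "j \<in> {..<M}" using I[of y] I[OF x] unfolding I1_def by auto
        qed
      qed (use phi in auto)
      finally show ?thesis .
    qed
    have s2: "(\<Sum>y\<in>I2. \<phi> (dst x y)) \<le> (\<Sum>j<M. \<phi> j)"
    proof -
      have inj: "inj_on (\<lambda>y. x - y) I2" unfolding I2_def by (auto intro: inj_onI)
      have "(\<Sum>y\<in>I2. \<phi> (dst x y)) = (\<Sum>y\<in>I2. \<phi> (x - y))" by (rule sum.cong) (auto simp: I2_def dst_def)
      also have "\<dots> = (\<Sum>j\<in>(\<lambda>y. x - y) ` I2. \<phi> j)" by (simp add: sum.reindex[OF inj])
      also have "\<dots> \<le> (\<Sum>j<M. \<phi> j)"
      proof (rule sum_mono2)
        show "(\<lambda>y. x - y) ` I2 \<subseteq> {..<M}"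
        proof
          fix j assume "j \<in> (\<lambda>y. x - y) ` I2"
          then obtain y where "y \<in> I2" "j = x - y" by auto
          thus "j \<in> {..<M}" using I[of y] I[OF x] unfolding I2_def by auto
        qed
      qed (use phi in auto)
      finally show ?thesis .
    qed
    show ?thesis using split s1 s2 by linarith
  qed
  have "(\<Sum>x\<in>I. \<Sum>y\<in>I. \<phi> (dst x y)) \<le> (\<Sum>x\<in>I. 2 * (\<Sum>j<M. \<phi> j))" by (rule sum_mono) (rule one)
  also have "\<dots> = 2 * real (card I) * (\<Sum>j<M. \<phi> j)" by simp
  finally show ?thesis .
qed

lemma cesaro_sub:
  fixes \<delta> :: "nat \<Rightarrow> real"
  assumes d0: "\<And>j. \<delta> j \<ge> 0" and lim: "(\<lambda>N. (\<Sum>j<N. \<delta> j) / real N) \<longlonglongrightarrow> 0" and b: "b \<ge> 1"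
  shows "(\<lambda>M. (\<Sum>j<M. \<delta> (b * j)) / real M) \<longlonglongrightarrow> 0"
proof -
  have sm: "strict_mono (\<lambda>M. b * M)" using b by (auto intro!: strict_monoI)
  have l2: "(\<lambda>M. (\<Sum>j<b * M. \<delta> j) / real (b * M)) \<longlonglongrightarrow> 0"
    using LIMSEQ_subseq_LIMSEQ[OF lim sm] by (simp add: o_def)
  hence l3: "(\<lambda>M. real b * ((\<Sum>j<b * M. \<delta> j) / real (b * M))) \<longlonglongrightarrow> 0"
    by (intro tendsto_mult_right_zero)
  have le: "(\<Sum>j<M. \<delta> (b * j)) / real M \<le> real b * ((\<Sum>j<b * M. \<delta> j) / real (b * M))" for M
  proof (cases "M = 0")
    case True then show ?thesis by simp
  next
    case False
    have inj: "inj_on (\<lambda>j. b * j) {..<M}" using b by (auto intro: inj_onI)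
    have "(\<Sum>j<M. \<delta> (b * j)) = (\<Sum>j\<in>(\<lambda>j. b * j) ` {..<M}. \<delta> j)" by (simp add: sum.reindex[OF inj])
    also have "\<dots> \<le> (\<Sum>j<b * M. \<delta> j)"
    proof (rule sum_mono2)
      show "(\<lambda>j. b * j) ` {..<M} \<subseteq> {..<b * M}" using b by auto
    qed (use d0 in auto)
    finally have "(\<Sum>j<M. \<delta> (b * j)) \<le> (\<Sum>j<b * M. \<delta> j)" .
    thus ?thesis using False b by (simp add: field_simps)
  qed
  have nn: "0 \<le> (\<Sum>j<M. \<delta> (b * j)) / real M" for M using d0 by (simp add: sum_nonneg)
  show ?thesis by (rule tendsto_sandwich[OF _ _ tendsto_const l3]) (use le nn in auto)
qed

lemma double_cesaro:
  fixes \<delta> :: "nat \<Rightarrow> real" and I :: "nat \<Rightarrow> nat set"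
  assumes d0: "\<And>j. \<delta> j \<ge> 0" and lim: "(\<lambda>N. (\<Sum>j<N. \<delta> j) / real N) \<longlonglongrightarrow> 0" and b: "b \<ge> 1"
    and fin: "\<And>M. finite (I M)" and card: "\<And>M. card (I M) \<le> M"
    and I: "\<And>M x. x \<in> I M \<Longrightarrow> lo \<le> x \<and> x < lo + M"
  shows "(\<lambda>M. (\<Sum>x\<in>I M. \<Sum>y\<in>I M. \<delta> (b * dst x y)) / (real M)^2) \<longlonglongrightarrow> 0"
proof -
  have l: "(\<lambda>M. 2 * ((\<Sum>j<M. \<delta> (b * j)) / real M)) \<longlonglongrightarrow> 0"
    using tendsto_mult_right_zero[OF cesaro_sub[OF d0 lim b], of 2] by simp
  have le: "(\<Sum>x\<in>I M. \<Sum>y\<in>I M. \<delta> (b * dst x y)) / (real M)^2 \<le> 2 * ((\<Sum>j<M. \<delta> (b * j)) / real M)" for M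
  proof (cases "M = 0")
    case True then show ?thesis by simp
  next
    case False
    have "(\<Sum>x\<in>I M. \<Sum>y\<in>I M. \<delta> (b * dst x y)) \<le> 2 * real (card (I M)) * (\<Sum>j<M. \<delta> (b * j))"
      by (rule dist_sum_bound[OF _ fin I]) (use d0 in auto)
    also have "\<dots> \<le> 2 * real M * (\<Sum>j<M. \<delta> (b * j))"
      using card d0 by (intro mult_right_mono sum_nonneg) auto
    finally show ?thesis using False by (simp add: field_simps power2_eq_square)
  qed
  have nn: "0 \<le> (\<Sum>x\<in>I M. \<Sum>y\<in>I M. \<delta> (b * dst x y)) / (real M)^2" for M using d0 by (simp add: sum_nonneg)
  show ?thesis by (rule tendsto_sandwich[OF _ _ tendsto_const l]) (use le nn in auto)
qed

lemma Qsum_cong: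
  assumes "\<And>n m. n \<ge> 1 \<Longrightarrow> m \<ge> 1 \<Longrightarrow> u (int n) (int m) = u' (int n) (int m)"
  shows "Qsum N M u = Qsum N M u'"
  unfolding Qsum_def using assms by (intro arg_cong2[where f="(/)"] sum.cong refl arg_cong2[where f="power"]) auto

lemma psi_cong_pos:
  "(\<forall>y\<ge>1. g y = g' y) \<Longrightarrow> psi bs g = psi bs g'"
proof (induction bs g arbitrary: g' rule: psi_induct2)
  case (1 g) then show ?case by simp
next
  case (2 b g)
  have "Qsum N M (\<lambda>y m. g (y + int b * m)) = Qsum N M (\<lambda>y m. g' (y + int b * m))" for N M
  proof (rule Qsum_cong)
    fix n m :: nat assume "n \<ge> 1" "m \<ge> 1"
    hence "int n + int b * int m \<ge> 1" by (simp add: add_increasing2)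
    thus "g (int n + int b * int m) = g' (int n + int b * int m)" using 2 by blast
  qed
  thus ?case by simp
next
  case (3 b b' bs g)
  have "psi (b' # bs) (\<lambda>y. g (y + int b * int h) * g (y + int b * int h')) =
        psi (b' # bs) (\<lambda>y. g' (y + int b * int h) * g' (y + int b * int h'))" for h h'
  proof (rule 3(1), intro allI impI)
    fix y :: int assume y: "y \<ge> 1"
    have "y + int b * int h \<ge> 1" "y + int b * int h' \<ge> 1" using y by (simp_all add: add_increasing2)
    thus "g (y + int b * int h) * g (y + int b * int h') = g' (y + int b * int h) * g' (y + int b * int h')"
      using 3(2) by simp
  qed
  thus ?case by simp
qed

lemma Inf_le_eps:
  fixes S :: "real set"
  assumes nn: "\<And>\<beta>. \<beta> \<in> S \<Longrightarrow> \<beta> \<ge> 0" and mem: "\<And>\<eta>. \<eta> > 0 \<Longrightarrow> x + \<eta> \<in> S"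
  shows "Inf S \<le> x"
proof (rule field_le_epsilon)
  fix \<eta> :: real assume "\<eta> > 0"
  hence "x + \<eta> \<in> S" by (rule mem)
  moreover have "bdd_below S" using nn by (auto simp: bdd_below_def)
  ultimately show "Inf S \<le> x + \<eta>" by (rule cInf_lower)
qed

lemma psi_le_base:
  assumes "\<And>\<eta>. \<eta> > 0 \<Longrightarrow> \<exists>M0. \<forall>M\<ge>M0. \<exists>N0. \<forall>N\<ge>N0. Qsum N M (\<lambda>y m. g (y + int b * m)) \<le> x + \<eta>"
  shows "psi [b] g \<le> x"
  unfolding psi.simps
proof (rule Inf_le_eps)
  fix \<beta> assume "\<beta> \<in> {\<beta>. \<exists>M0. \<forall>M\<ge>M0. \<exists>N0. \<forall>N\<ge>N0. Qsum N M (\<lambda>y m. g (y + int b * m)) \<le> \<beta>}"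
  then obtain M0 where "\<forall>M\<ge>M0. \<exists>N0. \<forall>N\<ge>N0. Qsum N M (\<lambda>y m. g (y + int b * m)) \<le> \<beta>" by auto
  then obtain N0 where "\<forall>N\<ge>N0. Qsum N M0 (\<lambda>y m. g (y + int b * m)) \<le> \<beta>" by auto
  thus "\<beta> \<ge> 0" using Qsum_nonneg[of N0 M0] by (meson order_trans order_refl)
qed (use assms in auto)

lemma psi_le_rec:
  assumes g: "\<And>y. \<bar>g y\<bar> \<le> 1"
    and H: "\<And>\<eta>. \<eta> > 0 \<Longrightarrow> \<exists>H0. \<forall>H\<ge>H0. (\<Sum>h<H. \<Sum>h'<H. sqrt (psi (b' # bs) (\<lambda>y. g (y + int b * int h) * g (y + int b * int h')))) / (real H)^2 \<le> x + \<eta>"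
  shows "psi (b # b' # bs) g \<le> x"
  unfolding psi.simps
proof (rule Inf_le_eps)
  have bd: "0 \<le> psi (b' # bs) (\<lambda>y. g (y + int b * int h) * g (y + int b * int h'))" for h h'
  proof -
    have "0 \<le> psi (b' # bs) (\<lambda>y. g (y + int b * int h) * g (y + int b * int h')) \<and>
        psi (b' # bs) (\<lambda>y. g (y + int b * int h) * g (y + int b * int h')) \<le> 1"
    proof (rule psi_bounds)
      fix y
      have "\<bar>g (y + int b * int h)\<bar> * \<bar>g (y + int b * int h')\<bar> \<le> 1"
        using g[of "y + int b * int h"] g[of "y + int b * int h'"] by (intro mult_le_one) auto
      thus "\<bar>g (y + int b * int h) * g (y + int b * int h')\<bar> \<le> 1" by (simp add: abs_mult)
    qed
    thus ?thesis by simp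
  qed
  fix \<beta> assume "\<beta> \<in> {\<beta>. \<exists>H0. \<forall>H\<ge>H0. (\<Sum>h<H. \<Sum>h'<H. sqrt (psi (b' # bs) (\<lambda>y. g (y + int b * int h) * g (y + int b * int h')))) / (real H)^2 \<le> \<beta>}"
  then obtain H0 where "\<forall>H\<ge>H0. (\<Sum>h<H. \<Sum>h'<H. sqrt (psi (b' # bs) (\<lambda>y. g (y + int b * int h) * g (y + int b * int h')))) / (real H)^2 \<le> \<beta>" by auto
  hence "(\<Sum>h<H0. \<Sum>h'<H0. sqrt (psi (b' # bs) (\<lambda>y. g (y + int b * int h) * g (y + int b * int h')))) / (real H0)^2 \<le> \<beta>" by auto
  moreover have "0 \<le> (\<Sum>h<H0. \<Sum>h'<H0. sqrt (psi (b' # bs) (\<lambda>y. g (y + int b * int h) * g (y + int b * int h')))) / (real H0)^2"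
    using bd by (intro divide_nonneg_nonneg sum_nonneg) auto
  ultimately show "\<beta> \<ge> 0" by linarith
qed (use H in auto)

lemma jensen_sqrt:
  fixes x :: "nat \<Rightarrow> nat \<Rightarrow> real"
  assumes "\<And>h h'. x h h' \<ge> 0"
  shows "(\<Sum>h<H. \<Sum>h'<H. sqrt (x h h')) / (real H)^2 \<le> sqrt ((\<Sum>h<H. \<Sum>h'<H. x h h') / (real H)^2)"
proof (cases "H = 0")
  case True then show ?thesis by simp
next
  case False
  have e1: "(\<Sum>h<H. \<Sum>h'<H. sqrt (x h h')) = (\<Sum>p\<in>{..<H}\<times>{..<H}. sqrt (x (fst p) (snd p)))"
    by (simp add: sum.cartesian_product split_def)
  have e2: "(\<Sum>h<H. \<Sum>h'<H. x h h') = (\<Sum>p\<in>{..<H}\<times>{..<H}. (sqrt (x (fst p) (snd p)))^2)"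
    using assms by (simp add: sum.cartesian_product split_def)
  have "(\<Sum>p\<in>{..<H}\<times>{..<H}. sqrt (x (fst p) (snd p)))^2 \<le> (\<Sum>p\<in>{..<H}\<times>{..<H}. (sqrt (x (fst p) (snd p)))^2) * real (card ({..<H}\<times>{..<H}))"
    by (rule sum_squared_le_sum_of_squares)
  hence "(\<Sum>h<H. \<Sum>h'<H. sqrt (x h h'))^2 \<le> (\<Sum>h<H. \<Sum>h'<H. x h h') * (real H)^2"
    unfolding e1 e2 by (simp add: card_cartesian_product power2_eq_square)
  hence "((\<Sum>h<H. \<Sum>h'<H. sqrt (x h h')) / (real H)^2)^2 \<le> (\<Sum>h<H. \<Sum>h'<H. x h h') / (real H)^2"
    using False by (simp add: power_divide field_simps power2_eq_square)
  moreover have "0 \<le> (\<Sum>h<H. \<Sum>h'<H. sqrt (x h h')) / (real H)^2" using assms by (simp add: sum_nonneg)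
  ultimately show ?thesis by (simp add: real_le_rsqrt)
qed

definition gF :: "nat set \<Rightarrow> ((nat \<Rightarrow> bool) \<Rightarrow> real) \<Rightarrow> int \<Rightarrow> real" where
  "gF S F y = (if y \<ge> 1 then F ((shiftT ^^ nat (y - 1)) (ind_point S)) else 0)"

lemma dst_mult: "dst (b * x) (b * y) = b * dst x y"
  unfolding dst_def by (auto simp: diff_mult_distrib2)

context wmsys begin

lemma int_abs_le1:
  assumes F: "cyl F L" and Fb: "\<forall>\<omega>. \<bar>F \<omega>\<bar> \<le> 1"
  shows "\<bar>\<integral>\<omega>. F \<omega> \<partial>\<mu>\<bar> \<le> 1"
proof -
  have i: "integrable \<mu> F" by (rule cyl_integrable[OF F])
  have "(\<integral>\<omega>. F \<omega> \<partial>\<mu>) \<le> 1" using Fb by (intro prob_space.integral_le_const[OF ps i]) (auto simp: abs_le_iff)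
  moreover have "(\<integral>\<omega>. - F \<omega> \<partial>\<mu>) \<le> 1" using Fb i by (intro prob_space.integral_le_const[OF ps]) (auto simp: abs_le_iff)
  ultimately show ?thesis by auto
qed

lemma Qsum_gF:
  "Qsum N M (\<lambda>y m. gF S F (y + int b * m)) =
   (\<Sum>n<N. ((\<Sum>m\<in>{1..M}. F ((shiftT ^^ (b * m)) ((shiftT ^^ n) (ind_point S)))) / real M)^2) / real N"
proof -
  have "gF S F (int (Suc k) + int b * int m) = F ((shiftT ^^ (b * m)) ((shiftT ^^ k) (ind_point S)))" for k m
  proof -
    have "nat (int (Suc k) + int b * int m - 1) = b * m + k" by (simp add: nat_add_distrib nat_mult_distrib)
    thus ?thesis unfolding gF_def by (simp add: funpow_add)
  qed
  thus ?thesis unfolding Qsum_def by (simp add: sum.atLeast1_atMost_eq del: of_nat_Suc)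
qed

lemma base_bound:
  assumes F: "cyl F L" and Fb: "\<forall>\<omega>. \<bar>F \<omega>\<bar> \<le> 1" and b: "b > 0"
  shows "psi [b] (gF S F) \<le> \<bar>\<integral>\<omega>. F \<omega> \<partial>\<mu>\<bar>"
proof -
  define I where "I = (\<integral>\<omega>. F \<omega> \<partial>\<mu>)"
  define c where "c j = (\<integral>\<omega>. F ((shiftT ^^ j) \<omega>) * F \<omega> \<partial>\<mu>)" for j
  define \<delta> where "\<delta> j = \<bar>c j - I * I\<bar>" for j
  have I1: "\<bar>I\<bar> \<le> 1" unfolding I_def by (rule int_abs_le1[OF F Fb])
  have ces: "(\<lambda>N. (\<Sum>j<N. \<delta> j) / real N) \<longlonglongrightarrow> 0"
    using wm_cyl[OF F F] unfolding \<delta>_def c_def I_def .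
  have D: "(\<lambda>M. (\<Sum>x\<in>{1..M}. \<Sum>y\<in>{1..M}. \<delta> (b * dst x y)) / (real M)^2) \<longlonglongrightarrow> 0"
    by (rule double_cesaro[OF _ ces, where lo=1]) (use b in \<open>auto simp: \<delta>_def\<close>)
  have "psi [b] (gF S F) \<le> I^2"
  proof (rule psi_le_base)
    fix \<eta> :: real assume eta: "\<eta> > 0"
    have "eventually (\<lambda>M. (\<Sum>x\<in>{1..M}. \<Sum>y\<in>{1..M}. \<delta> (b * dst x y)) / (real M)^2 < \<eta> / 2) sequentially"
      using order_tendstoD(2)[OF D, of "\<eta> / 2"] eta by linarith
    then obtain M1 where M1: "\<forall>M\<ge>M1. (\<Sum>x\<in>{1..M}. \<Sum>y\<in>{1..M}. \<delta> (b * dst x y)) / (real M)^2 < \<eta> / 2"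
      unfolding eventually_sequentially by blast
    show "\<exists>M0. \<forall>M\<ge>M0. \<exists>N0. \<forall>N\<ge>N0. Qsum N M (\<lambda>y m. gF S F (y + int b * m)) \<le> I^2 + \<eta>"
    proof (rule exI[of _ "max M1 1"], intro allI impI)
      fix M assume M: "M \<ge> max M1 1"
      define f where "f \<omega> = ((\<Sum>m\<in>{1..M}. F ((shiftT ^^ (b * m)) \<omega>)) / real M)^2" for \<omega>
      have fc: "continuous_on UNIV f" unfolding f_def using M
        by (intro continuous_intros cyl_continuous[OF cyl_shift[OF F]]) auto
      have fint: "(\<integral>\<omega>. f \<omega> \<partial>\<mu>) = (\<Sum>m\<in>{1..M}. \<Sum>m'\<in>{1..M}. c (b * dst m m')) / (real M)^2"
      proof -
        have fe: "f \<omega> = (\<Sum>m\<in>{1..M}. \<Sum>m'\<in>{1..M}. F ((shiftT ^^ (b * m)) \<omega>) * F ((shiftT ^^ (b * m')) \<omega>)) / (real M)^2" for \<omega>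
          unfolding f_def by (simp add: power_divide power2_eq_square sum_product)
        have ii: "integrable \<mu> (\<lambda>\<omega>. F ((shiftT ^^ (b * m)) \<omega>) * F ((shiftT ^^ (b * m')) \<omega>))" for m m'
          by (rule cyl_integrable[OF cyl_mult[OF cyl_shift[OF F] cyl_shift[OF F]]])
        have "(\<integral>\<omega>. f \<omega> \<partial>\<mu>) = (\<integral>\<omega>. (\<Sum>m\<in>{1..M}. \<Sum>m'\<in>{1..M}. F ((shiftT ^^ (b * m)) \<omega>) * F ((shiftT ^^ (b * m')) \<omega>)) \<partial>\<mu>) / (real M)^2"
          unfolding fe by simp
        also have "(\<integral>\<omega>. (\<Sum>m\<in>{1..M}. \<Sum>m'\<in>{1..M}. F ((shiftT ^^ (b * m)) \<omega>) * F ((shiftT ^^ (b * m')) \<omega>)) \<partial>\<mu>)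
           = (\<Sum>m\<in>{1..M}. \<Sum>m'\<in>{1..M}. \<integral>\<omega>. F ((shiftT ^^ (b * m)) \<omega>) * F ((shiftT ^^ (b * m')) \<omega>) \<partial>\<mu>)"
        proof -
          have "(\<integral>\<omega>. (\<Sum>m\<in>{1..M}. \<Sum>m'\<in>{1..M}. F ((shiftT ^^ (b * m)) \<omega>) * F ((shiftT ^^ (b * m')) \<omega>)) \<partial>\<mu>)
             = (\<Sum>m\<in>{1..M}. \<integral>\<omega>. (\<Sum>m'\<in>{1..M}. F ((shiftT ^^ (b * m)) \<omega>) * F ((shiftT ^^ (b * m')) \<omega>)) \<partial>\<mu>)"
            by (rule Bochner_Integration.integral_sum) (use ii in auto)
          also have "\<dots> = (\<Sum>m\<in>{1..M}. \<Sum>m'\<in>{1..M}. \<integral>\<omega>. F ((shiftT ^^ (b * m)) \<omega>) * F ((shiftT ^^ (b * m')) \<omega>) \<partial>\<mu>)"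
            by (rule sum.cong[OF refl], rule Bochner_Integration.integral_sum) (use ii in auto)
          finally show ?thesis .
        qed
        also have "\<dots> = (\<Sum>m\<in>{1..M}. \<Sum>m'\<in>{1..M}. c (b * dst m m'))"
        proof (intro sum.cong refl)
          fix m m'
          show "(\<integral>\<omega>. F ((shiftT ^^ (b * m)) \<omega>) * F ((shiftT ^^ (b * m')) \<omega>) \<partial>\<mu>) = c (b * dst m m')"
            unfolding c_def int_two_shift[OF F, of "b * m" "b * m'"] dst_mult ..
        qed
        finally show ?thesis .
      qed
      have fle: "(\<integral>\<omega>. f \<omega> \<partial>\<mu>) \<le> I^2 + \<eta> / 2"
      proof -
        have Mp: "real M > 0" using M by simp
        have "(\<Sum>m\<in>{1..M}. \<Sum>m'\<in>{1..M}. c (b * dst m m')) \<le> (\<Sum>m\<in>{1..M}. \<Sum>m'\<in>{1..M}. I * I + \<delta> (b * dst m m'))"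
          unfolding \<delta>_def by (intro sum_mono) linarith
        also have "\<dots> = (real M)^2 * I^2 + (\<Sum>m\<in>{1..M}. \<Sum>m'\<in>{1..M}. \<delta> (b * dst m m'))"
          by (simp add: sum.distrib power2_eq_square)
        finally have "(\<integral>\<omega>. f \<omega> \<partial>\<mu>) \<le> ((real M)^2 * I^2 + (\<Sum>m\<in>{1..M}. \<Sum>m'\<in>{1..M}. \<delta> (b * dst m m'))) / (real M)^2"
          unfolding fint using Mp by (simp add: divide_right_mono)
        also have "\<dots> = I^2 + (\<Sum>m\<in>{1..M}. \<Sum>m'\<in>{1..M}. \<delta> (b * dst m m')) / (real M)^2"
          using Mp by (simp add: field_simps)
        also have "\<dots> \<le> I^2 + \<eta> / 2" using M1 M by (simp add: less_imp_le)
        finally show ?thesis .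
      qed
      have conv: "(\<lambda>N. (\<Sum>n<N. f ((shiftT ^^ n) (ind_point S))) / real N) \<longlonglongrightarrow> (\<integral>\<omega>. f \<omega> \<partial>\<mu>)"
        by (rule generic_conv[OF fc])
      have "eventually (\<lambda>N. (\<Sum>n<N. f ((shiftT ^^ n) (ind_point S))) / real N < (\<integral>\<omega>. f \<omega> \<partial>\<mu>) + \<eta> / 2) sequentially"
        using order_tendstoD(2)[OF conv, of "(\<integral>\<omega>. f \<omega> \<partial>\<mu>) + \<eta> / 2"] eta by linarith
      then obtain N0 where N0: "\<forall>N\<ge>N0. (\<Sum>n<N. f ((shiftT ^^ n) (ind_point S))) / real N < (\<integral>\<omega>. f \<omega> \<partial>\<mu>) + \<eta> / 2"
        unfolding eventually_sequentially by blast
      show "\<exists>N0. \<forall>N\<ge>N0. Qsum N M (\<lambda>y m. gF S F (y + int b * m)) \<le> I^2 + \<eta>"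
      proof (rule exI[of _ N0], intro allI impI)
        fix N assume "N \<ge> N0"
        hence "(\<Sum>n<N. f ((shiftT ^^ n) (ind_point S))) / real N < (\<integral>\<omega>. f \<omega> \<partial>\<mu>) + \<eta> / 2" using N0 by blast
        moreover have "Qsum N M (\<lambda>y m. gF S F (y + int b * m)) = (\<Sum>n<N. f ((shiftT ^^ n) (ind_point S))) / real N"
          unfolding Qsum_gF f_def ..
        ultimately show "Qsum N M (\<lambda>y m. gF S F (y + int b * m)) \<le> I^2 + \<eta>" using fle by linarith
      qed
    qed
  qed
  also have "I^2 \<le> \<bar>I\<bar>"
  proof -
    have "\<bar>I\<bar> * \<bar>I\<bar> \<le> 1 * \<bar>I\<bar>" using I1 by (intro mult_right_mono) auto
    thus ?thesis by (simp add: power2_eq_square abs_mult_self_eq)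
  qed
  finally show ?thesis unfolding I_def .
qed

end

context wmsys begin

lemma gF_bound: "\<forall>\<omega>. \<bar>F \<omega>\<bar> \<le> 1 \<Longrightarrow> \<bar>gF S F y\<bar> \<le> 1"
  unfolding gF_def by auto

lemma gF_prod:
  assumes "y \<ge> 1"
  shows "gF S F (y + int b * int h) * gF S F (y + int b * int h') =
         gF S (\<lambda>\<omega>. F ((shiftT ^^ (b * h)) \<omega>) * F ((shiftT ^^ (b * h')) \<omega>)) y"
proof -
  have e: "nat (y + int b * int h - 1) = b * h + nat (y - 1)" for h
  proof -
    have "y - 1 \<ge> 0" using assms by simp
    hence "nat (int (b * h) + (y - 1)) = b * h + nat (y - 1)" by (simp add: nat_add_distrib nat_mult_distrib)
    moreover have "y + int b * int h - 1 = int (b * h) + (y - 1)" by simp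
    ultimately show ?thesis by simp
  qed
  have "y + int b * int h \<ge> 1" "y + int b * int h' \<ge> 1" using assms by (simp_all add: add_increasing2)
  thus ?thesis using assms unfolding gF_def by (simp add: e funpow_add)
qed

lemma psi_gF_bound:
  "\<forall>b0 F L. cyl F L \<longrightarrow> (\<forall>\<omega>. \<bar>F \<omega>\<bar> \<le> 1) \<longrightarrow> (\<forall>x\<in>set (b0 # bs). x > 0) \<longrightarrow>
     psi (b0 # bs) (gF S F) \<le> \<bar>\<integral>\<omega>. F \<omega> \<partial>\<mu>\<bar>"
proof (induction bs)
  case Nil
  show ?case using base_bound by auto
next
  case (Cons b1 bs1)
  show ?case
  proof (intro allI impI)
    fix b0 F L assume F: "cyl F L" and Fb: "\<forall>\<omega>. \<bar>F \<omega>\<bar> \<le> 1" and pos: "\<forall>x\<in>set (b0 # b1 # bs1). x > 0"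
    have b0: "b0 \<ge> 1" using pos by auto
    define I where "I = (\<integral>\<omega>. F \<omega> \<partial>\<mu>)"
    define c where "c j = (\<integral>\<omega>. F ((shiftT ^^ j) \<omega>) * F \<omega> \<partial>\<mu>)" for j
    define \<delta> where "\<delta> j = \<bar>c j - I * I\<bar>" for j
    have d0: "\<delta> j \<ge> 0" for j unfolding \<delta>_def by simp
    have ces: "(\<lambda>N. (\<Sum>j<N. \<delta> j) / real N) \<longlonglongrightarrow> 0"
      using wm_cyl[OF F F] unfolding \<delta>_def c_def I_def .
    have D: "(\<lambda>H. (\<Sum>x\<in>{..<H}. \<Sum>y\<in>{..<H}. \<delta> (b0 * dst x y)) / (real H)^2) \<longlonglongrightarrow> 0"
      by (rule double_cesaro[OF d0 ces b0, where lo=0]) auto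
    hence D2: "(\<lambda>H. sqrt ((\<Sum>x\<in>{..<H}. \<Sum>y\<in>{..<H}. \<delta> (b0 * dst x y)) / (real H)^2)) \<longlonglongrightarrow> 0"
      using tendsto_real_sqrt by fastforce
    define F2 where "F2 h h' = (\<lambda>\<omega>. F ((shiftT ^^ (b0 * h)) \<omega>) * F ((shiftT ^^ (b0 * h')) \<omega>))" for h h'
    have psieq: "psi (b1 # bs1) (\<lambda>y. gF S F (y + int b0 * int h) * gF S F (y + int b0 * int h')) = psi (b1 # bs1) (gF S (F2 h h'))" for h h'
      by (rule psi_cong_pos) (auto simp: gF_prod F2_def)
    have F2c: "cyl (F2 h h') (max (L + b0 * h) (L + b0 * h'))" for h h'
      unfolding F2_def by (rule cyl_mult[OF cyl_shift[OF F] cyl_shift[OF F]])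
    have F2b: "\<forall>\<omega>. \<bar>F2 h h' \<omega>\<bar> \<le> 1" for h h'
    proof
      fix \<omega>
      have "\<bar>F ((shiftT ^^ (b0 * h)) \<omega>)\<bar> * \<bar>F ((shiftT ^^ (b0 * h')) \<omega>)\<bar> \<le> 1" using Fb by (intro mult_le_one) auto
      thus "\<bar>F2 h h' \<omega>\<bar> \<le> 1" unfolding F2_def by (simp add: abs_mult)
    qed
    have IH: "psi (b1 # bs1) (gF S (F2 h h')) \<le> \<bar>\<integral>\<omega>. F2 h h' \<omega> \<partial>\<mu>\<bar>" for h h'
    proof -
      have p1: "\<forall>x\<in>set (b1 # bs1). x > 0" using pos by auto
      show ?thesis using Cons.IH[rule_format, OF F2c[of h h'] F2b[of h h', rule_format] p1[rule_format]] .
    qed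
    have intF2: "(\<integral>\<omega>. F2 h h' \<omega> \<partial>\<mu>) = c (b0 * dst h h')" for h h'
      unfolding F2_def c_def int_two_shift[OF F, of "b0 * h" "b0 * h'"] dst_mult ..
    have sq: "sqrt (psi (b1 # bs1) (\<lambda>y. gF S F (y + int b0 * int h) * gF S F (y + int b0 * int h'))) \<le> \<bar>I\<bar> + sqrt (\<delta> (b0 * dst h h'))" for h h'
    proof -
      have "sqrt (psi (b1 # bs1) (\<lambda>y. gF S F (y + int b0 * int h) * gF S F (y + int b0 * int h'))) \<le> sqrt \<bar>c (b0 * dst h h')\<bar>"
        unfolding psieq using IH[of h h'] intF2[of h h'] by (simp add: real_sqrt_le_mono)
      also have "\<dots> \<le> sqrt (I^2 + \<delta> (b0 * dst h h'))"
        using abs_triangle_ineq[of "c (b0 * dst h h') - I * I" "I * I"]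
        by (intro real_sqrt_le_mono) (simp add: \<delta>_def power2_eq_square)
      also have "\<dots> \<le> sqrt (I^2) + sqrt (\<delta> (b0 * dst h h'))" using d0 by (intro sqrt_add_le_add_sqrt) auto
      finally show ?thesis by simp
    qed
    show "psi (b0 # b1 # bs1) (gF S F) \<le> \<bar>\<integral>\<omega>. F \<omega> \<partial>\<mu>\<bar>"
      unfolding I_def[symmetric]
    proof (rule psi_le_rec)
      show "\<And>y. \<bar>gF S F y\<bar> \<le> 1" using gF_bound[OF Fb] .
      fix \<eta> :: real assume eta: "\<eta> > 0"
      have "eventually (\<lambda>H. sqrt ((\<Sum>x\<in>{..<H}. \<Sum>y\<in>{..<H}. \<delta> (b0 * dst x y)) / (real H)^2) < \<eta>) sequentially"
        using order_tendstoD(2)[OF D2, of \<eta>] eta by linarith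
      then obtain H0 where H0: "\<forall>H\<ge>H0. sqrt ((\<Sum>x\<in>{..<H}. \<Sum>y\<in>{..<H}. \<delta> (b0 * dst x y)) / (real H)^2) < \<eta>"
        unfolding eventually_sequentially by blast
      show "\<exists>H0. \<forall>H\<ge>H0. (\<Sum>h<H. \<Sum>h'<H. sqrt (psi (b1 # bs1) (\<lambda>y. gF S F (y + int b0 * int h) * gF S F (y + int b0 * int h')))) / (real H)^2 \<le> \<bar>I\<bar> + \<eta>"
      proof (rule exI[of _ "max H0 1"], intro allI impI)
        fix H assume H: "H \<ge> max H0 1"
        have Hp: "real H > 0" using H by simp
        have "(\<Sum>h<H. \<Sum>h'<H. sqrt (psi (b1 # bs1) (\<lambda>y. gF S F (y + int b0 * int h) * gF S F (y + int b0 * int h')))) / (real H)^2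
           \<le> (\<Sum>h<H. \<Sum>h'<H. \<bar>I\<bar> + sqrt (\<delta> (b0 * dst h h'))) / (real H)^2"
          using Hp sq by (intro divide_right_mono sum_mono) auto
        also have "\<dots> = \<bar>I\<bar> + (\<Sum>h<H. \<Sum>h'<H. sqrt (\<delta> (b0 * dst h h'))) / (real H)^2"
          using Hp by (simp add: sum.distrib field_simps power2_eq_square)
        also have "(\<Sum>h<H. \<Sum>h'<H. sqrt (\<delta> (b0 * dst h h'))) / (real H)^2 \<le> sqrt ((\<Sum>h<H. \<Sum>h'<H. \<delta> (b0 * dst h h')) / (real H)^2)"
          by (rule jensen_sqrt) (rule d0)
        also have "\<dots> < \<eta>" using H0 H by auto
        finally show "(\<Sum>h<H. \<Sum>h'<H. sqrt (psi (b1 # bs1) (\<lambda>y. gF S F (y + int b0 * int h) * gF S F (y + int b0 * int h')))) / (real H)^2 \<le> \<bar>I\<bar> + \<eta>"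
          by simp
      qed
    qed
  qed
qed

end

lemma count_sum:
  "(\<Sum>n<N. (if Suc n \<in> S then 1 else 0 :: real)) = real (card (S \<inter> {1..N}))"
proof (induction N)
  case 0 then show ?case by simp
next
  case (Suc N)
  have e: "S \<inter> {1..Suc N} = (if Suc N \<in> S then insert (Suc N) (S \<inter> {1..N}) else S \<inter> {1..N})"
    by (auto simp: atLeastAtMostSuc_conv)
  have "Suc N \<notin> S \<inter> {1..N}" by simp
  thus ?case using Suc e by (auto simp: card_insert_disjoint)
qed

context wmsys begin

definition indF :: "(nat \<Rightarrow> bool) \<Rightarrow> real" where "indF \<omega> = (if \<omega> 0 then 1 else 0)"

lemma cyl_indF: "cyl indF 1" unfolding cyl_def indF_def by simp

lemma dens_int:
  assumes conv: "convergent (density_seq S)"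
  shows "dens S = (\<integral>\<omega>. indF \<omega> \<partial>\<mu>)"
proof -
  have g: "(\<lambda>N. (\<Sum>n<N. indF ((shiftT ^^ n) (ind_point S))) / real N) \<longlonglongrightarrow> (\<integral>\<omega>. indF \<omega> \<partial>\<mu>)"
    by (rule generic_conv[OF cyl_continuous[OF cyl_indF]])
  have "(\<Sum>n<N. indF ((shiftT ^^ n) (ind_point S))) / real N = density_seq S N" for N
    unfolding indF_def density_seq_def funpow_shiftT ind_point_def using count_sum[where N=N and S=S] by simp
  hence "density_seq S \<longlonglongrightarrow> (\<integral>\<omega>. indF \<omega> \<partial>\<mu>)" using g by simp
  moreover have "density_seq S \<longlonglongrightarrow> dens S" using conv unfolding dens_def by (simp add: convergent_LIMSEQ_iff)
  ultimately show ?thesis using LIMSEQ_unique by blast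
qed

lemma dens_bounds:
  assumes conv: "convergent (density_seq S)"
  shows "0 \<le> dens S" "dens S \<le> 1"
proof -
  have "\<bar>\<integral>\<omega>. indF \<omega> \<partial>\<mu>\<bar> \<le> 1" by (rule int_abs_le1[OF cyl_indF]) (simp add: indF_def)
  moreover have "0 \<le> (\<integral>\<omega>. indF \<omega> \<partial>\<mu>)" using Bochner_Integration.integral_nonneg[where M=\<mu> and f=indF] by (simp add: indF_def)
  ultimately show "0 \<le> dens S" "dens S \<le> 1" using dens_int[OF conv] by auto
qed

lemma xi_psi:
  assumes conv: "convergent (density_seq S)" and bs: "bs \<noteq> []" "\<forall>x\<in>set bs. x > 0"
  shows "psi bs (xi S) \<le> 0"
proof -
  define F where "F \<omega> = indF \<omega> - dens S" for \<omega>
  have Fc: "cyl F 1" unfolding F_def cyl_def indF_def by simp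
  have Fb: "\<forall>\<omega>. \<bar>F \<omega>\<bar> \<le> 1" using dens_bounds[OF conv] unfolding F_def indF_def by auto
  have i1: "integrable \<mu> indF" by (rule cyl_integrable[OF cyl_indF])
  have i2: "integrable \<mu> (\<lambda>\<omega>. dens S)"
    by (rule finite_measure.integrable_const_bound[OF prob_space.axioms(1)[OF ps], where B="\<bar>dens S\<bar>"]) auto
  have "(\<integral>\<omega>. F \<omega> \<partial>\<mu>) = (\<integral>\<omega>. indF \<omega> \<partial>\<mu>) - (\<integral>\<omega>. dens S \<partial>\<mu>)"
    unfolding F_def by (rule Bochner_Integration.integral_diff[OF i1 i2])
  also have "(\<integral>\<omega>. dens S \<partial>\<mu>) = dens S" using prob_space.prob_space[OF ps] by simp
  finally have I0: "(\<integral>\<omega>. F \<omega> \<partial>\<mu>) = 0" using dens_int[OF conv] by simp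
  have xe: "xi S = gF S F"
  proof
    fix y :: int
    show "xi S y = gF S F y"
    proof (cases "y \<ge> 1")
      case True
      hence "Suc (nat (y - 1)) = nat y" by simp
      thus ?thesis using True unfolding xi_def gF_def F_def indF_def funpow_shiftT ind_point_def by simp
    next
      case False thus ?thesis unfolding xi_def gF_def by simp
    qed
  qed
  obtain b0 bs' where bs': "bs = b0 # bs'" using bs(1) by (cases bs) auto
  have "psi bs (gF S F) \<le> \<bar>\<integral>\<omega>. F \<omega> \<partial>\<mu>\<bar>"
    using psi_gF_bound[of bs'] Fc Fb bs(2) unfolding bs' by blast
  thus ?thesis using xe I0 by simp
qed

lemma xi_bound:
  assumes conv: "convergent (density_seq S)"
  shows "\<bar>xi S y\<bar> \<le> 1"
  using dens_bounds[OF conv] unfolding xi_def by auto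

end

lemma WM_facts:
  assumes "WM_set S"
  shows "(\<forall>y. \<bar>xi S y\<bar> \<le> 1) \<and> (\<forall>bs. bs \<noteq> [] \<longrightarrow> (\<forall>x\<in>set bs. x > 0) \<longrightarrow> psi bs (xi S) \<le> 0)"
proof -
  from assms obtain \<mu> where inv: "invariant_prob (orbit_closure (ind_point S)) \<mu>"
    and gen: "generic_for (ind_point S) (orbit_closure (ind_point S)) \<mu>" and wm: "weakly_mixing \<mu>"
    and conv: "convergent (density_seq S)"
    unfolding WM_set_def by blast
  interpret wmsys S \<mu> using inv gen wm by unfold_locales
  show ?thesis using xi_bound[OF conv] xi_psi[OF conv] by blast
qed

theorem mainTheorem13:
  fixes k :: nat and A :: "nat \<Rightarrow> nat set" and a b :: "nat \<Rightarrow> int"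
  assumes "k \<ge> 1"
    and "\<forall>i<k. WM_set (A i)"
    and "\<forall>i<k. a i \<noteq> 0 \<and> b i \<noteq> 0 \<and> a i > 0"
    and "\<forall>i<k. \<forall>j<k. i \<noteq> j \<longrightarrow> a i * b j - a j * b i \<noteq> 0"
  shows "\<forall>\<epsilon>>0. \<exists>M\<^sub>0. \<forall>M\<ge>M\<^sub>0. \<exists>N\<^sub>0. \<forall>N\<ge>N\<^sub>0.
           normN N (\<lambda>n. (1 / real M) * (\<Sum>m=1..M. \<Prod>i<k. xi (A i) (a i * int n + b i * int m))) < \<epsilon>"
proof (intro allI impI)
  fix \<epsilon> :: real assume e: "\<epsilon> > 0"
  obtain k' where k: "k = Suc k'" using assms(1) by (cases k) auto
  have VF: "VF k a b" unfolding VF_def using assms(3,4) by auto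
  have "QP k a b" unfolding k by (rule QP_main) (use VF k in simp)
  then obtain bs C where C0: "C \<ge> 0" and bsne: "bs \<noteq> []" and bspos: "\<forall>x\<in>set bs. x > 0"
    and Q: "\<forall>g::nat \<Rightarrow> int \<Rightarrow> real. (\<forall>i y. \<bar>g i y\<bar> \<le> 1) \<longrightarrow>
       (\<forall>\<epsilon>>0. \<exists>M0. \<forall>M\<ge>M0. \<forall>c::nat \<Rightarrow> int. \<exists>N0. \<forall>N\<ge>N0.
          Qsum N M (\<lambda>n m. \<Prod>i<k. g i (a i * n + b i * m + c i)) \<le> C * psi bs (g 0) + \<epsilon>)"
    unfolding QP_def by (elim exE conjE) blast
  define g where "g i = (if i < k then xi (A i) else (\<lambda>_. 0))" for i
  have gb: "\<forall>i y. \<bar>g i y\<bar> \<le> 1"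
  proof (intro allI)
    fix i y
    show "\<bar>g i y\<bar> \<le> 1"
    proof (cases "i < k")
      case True
      hence "WM_set (A i)" using assms(2) by blast
      hence "\<forall>y. \<bar>xi (A i) y\<bar> \<le> 1" using WM_facts by blast
      thus ?thesis using True unfolding g_def by simp
    qed (simp add: g_def)
  qed
  have g0: "g 0 = xi (A 0)" unfolding g_def using assms(1) by simp
  have "WM_set (A 0)" using assms(1,2) by simp
  hence psi0: "psi bs (g 0) \<le> 0" unfolding g0 using WM_facts[of "A 0"] bsne bspos by blast
  have e2: "\<epsilon>^2 / 2 > 0" using e by simp
  have "\<exists>M0. \<forall>M\<ge>M0. \<forall>c::nat \<Rightarrow> int. \<exists>N0. \<forall>N\<ge>N0.
          Qsum N M (\<lambda>n m. \<Prod>i<k. g i (a i * n + b i * m + c i)) \<le> C * psi bs (g 0) + \<epsilon>^2 / 2"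
    by (rule Q[rule_format, of g, OF gb[rule_format] e2])
  then obtain M0 where M0: "\<forall>M\<ge>M0. \<forall>c::nat \<Rightarrow> int. \<exists>N0. \<forall>N\<ge>N0.
          Qsum N M (\<lambda>n m. \<Prod>i<k. g i (a i * n + b i * m + c i)) \<le> C * psi bs (g 0) + \<epsilon>^2 / 2" by (elim exE)
  show "\<exists>M\<^sub>0. \<forall>M\<ge>M\<^sub>0. \<exists>N\<^sub>0. \<forall>N\<ge>N\<^sub>0.
           normN N (\<lambda>n. (1 / real M) * (\<Sum>m=1..M. \<Prod>i<k. xi (A i) (a i * int n + b i * int m))) < \<epsilon>"
  proof (rule exI[of _ M0], intro allI impI)
    fix M assume "M \<ge> M0"
    hence "\<exists>N0. \<forall>N\<ge>N0. Qsum N M (\<lambda>n m. \<Prod>i<k. g i (a i * n + b i * m + (\<lambda>_. 0) i)) \<le> C * psi bs (g 0) + \<epsilon>^2 / 2"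
      by (rule M0[rule_format, of M "\<lambda>_. 0"])
    then obtain N0 where N0: "\<forall>N\<ge>N0. Qsum N M (\<lambda>n m. \<Prod>i<k. g i (a i * n + b i * m + (\<lambda>_. 0) i)) \<le> C * psi bs (g 0) + \<epsilon>^2 / 2"
      by (elim exE)
    show "\<exists>N\<^sub>0. \<forall>N\<ge>N\<^sub>0. normN N (\<lambda>n. (1 / real M) * (\<Sum>m=1..M. \<Prod>i<k. xi (A i) (a i * int n + b i * int m))) < \<epsilon>"
    proof (rule exI[of _ N0], intro allI impI)
      fix N assume "N \<ge> N0"
      hence QN: "Qsum N M (\<lambda>n m. \<Prod>i<k. g i (a i * n + b i * m + (\<lambda>_. 0) i)) \<le> C * psi bs (g 0) + \<epsilon>^2 / 2"
        by (rule N0[rule_format])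
      have "C * psi bs (g 0) \<le> 0" using C0 psi0 by (simp add: mult_nonneg_nonpos)
      hence QN': "Qsum N M (\<lambda>n m. \<Prod>i<k. g i (a i * n + b i * m + (\<lambda>_. 0) i)) \<le> \<epsilon>^2 / 2" using QN by linarith
      have eqQ: "normN N (\<lambda>n. (1 / real M) * (\<Sum>m=1..M. \<Prod>i<k. xi (A i) (a i * int n + b i * int m)))
         = sqrt (Qsum N M (\<lambda>n m. \<Prod>i<k. g i (a i * n + b i * m + (\<lambda>_. 0) i)))"
      proof -
        have "(\<Prod>i<k. g i (a i * int n + b i * int m + 0)) = (\<Prod>i<k. xi (A i) (a i * int n + b i * int m))" for n m
          by (rule prod.cong) (auto simp: g_def)
        thus ?thesis unfolding normN_def Qsum_def by simp
      qed
      have "sqrt (Qsum N M (\<lambda>n m. \<Prod>i<k. g i (a i * n + b i * m + (\<lambda>_. 0) i))) \<le> sqrt (\<epsilon>^2 / 2)"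
        using QN' by (rule real_sqrt_le_mono)
      also have "\<dots> < sqrt (\<epsilon>^2)" using e by (intro real_sqrt_less_mono) simp
      also have "\<dots> = \<epsilon>" using e by simp
      finally show "normN N (\<lambda>n. (1 / real M) * (\<Sum>m=1..M. \<Prod>i<k. xi (A i) (a i * int n + b i * int m))) < \<epsilon>"
        unfolding eqQ .
    qed
  qed
qed

end
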